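(* Let $a_1,\dots,a_7$ be positive integers and let $[a_1,\dots,a_7]$ be the simple polytope whose standard Gale diagram is a regular heptagon with $a_i$ points at the $i$-th vertex. Up to Davis–Januszkiewicz equivalence, there are exactly two small covers over $[a_1,\dots,a_7]$. Neither of them is a real toric manifold.
   Context: Let $v_1,\dots,v_7$ be the vertices, in counterclockwise order, of a regular heptagon in $\mathbb{R}^2$ centered at the origin $O$, and let $\phi:V\to\{v_1,\dots,v_7\}$ be a surjection with $|\phi^{-1}(v_i)|=a_i$. The simplicial complex $K$ on $V$ in which $I\subseteq V$ is a face iff $O\in\operatorname{conv}\{\phi(j):j\in V\setminus I\}$ is the boundary complex of the dual of the simple polytope $[a_1,\dots,a_7]$, of dimension $n=|V|-3$. A small cover over it corresponds to a non-singular characteristic map over $\mathbb{Z}_2$, i.e. $\lambda:V\to\mathbb{Z}_2^n$ with the vectors on each face of $K$ linearly independent over $\mathbb{Z}_2$; two are Davis–Januszkiewicz equivalent if they differ by an element of $GL_n(\mathbb{Z}_2)$. A real toric manifold is the fixed point set of the complex conjugation on a (compact smooth) toric manifold; a small cover over $K$ is a real toric manifold iff its $\mathbb{Z}_2$-characteristic map is D-J equivalent to the mod 2 reduction of (the primitive ray generators of) a complete non-singular fan over $K$. *)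

theory Defs
  imports "HOL-Analysis.Analysis" "HOL-Library.Z2"
begin

definition hept_vert :: "nat \<Rightarrow> complex" where
  "hept_vert i = cis (2 * pi * real i / 7)"

text \<open>The ground set V, with a_i points over the i-th vertex: V = {(i,k). 1 \<le> i \<le> 7, k < a_i};
  phi (i,k) = v_i.\<close>
definition hV :: "(nat \<Rightarrow> nat) \<Rightarrow> (nat \<times> nat) set" where
  "hV a = {(i, k). 1 \<le> i \<and> i \<le> 7 \<and> k < a i}"

definition hphi :: "nat \<times> nat \<Rightarrow> complex" where
  "hphi j = hept_vert (fst j)"

definition hface :: "(nat \<Rightarrow> nat) \<Rightarrow> (nat \<times> nat) set \<Rightarrow> bool" where
  "hface a I \<longleftrightarrow> I \<subseteq> hV a \<and> 0 \<in> convex hull (hphi ` (hV a - I))"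

definition hdim :: "(nat \<Rightarrow> nat) \<Rightarrow> nat" where
  "hdim a = card (hV a) - 3"

text \<open>Vectors of Z_2^n are represented as functions nat \<Rightarrow> bit vanishing from index n on.\<close>
definition in_Z2n :: "nat \<Rightarrow> (nat \<Rightarrow> bit) \<Rightarrow> bool" where
  "in_Z2n n x \<longleftrightarrow> (\<forall>i\<ge>n. x i = 0)"

definition lin_indep_Z2 :: "nat \<Rightarrow> ('v \<Rightarrow> nat \<Rightarrow> bit) \<Rightarrow> 'v set \<Rightarrow> bool" where
  "lin_indep_Z2 n lam S \<longleftrightarrow>
     (\<forall>c :: 'v \<Rightarrow> bit. (\<forall>i<n. (\<Sum>j\<in>S. c j * lam j i) = 0) \<longrightarrow> (\<forall>j\<in>S. c j = 0))"

text \<open>Non-singular characteristic map over Z_2 on K (a small cover over [a_1,...,a_7]).\<close>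
definition char_map_Z2 :: "(nat \<Rightarrow> nat) \<Rightarrow> (nat \<times> nat \<Rightarrow> nat \<Rightarrow> bit) \<Rightarrow> bool" where
  "char_map_Z2 a lam \<longleftrightarrow>
     (\<forall>j\<in>hV a. in_Z2n (hdim a) (lam j)) \<and>
     (\<forall>I. hface a I \<longrightarrow> lin_indep_Z2 (hdim a) lam I)"

definition GL_Z2 :: "nat \<Rightarrow> (nat \<Rightarrow> nat \<Rightarrow> bit) \<Rightarrow> bool" where
  "GL_Z2 n A \<longleftrightarrow> (\<exists>B. (\<forall>i<n. \<forall>k<n. (\<Sum>l<n. A i l * B l k) = (if i = k then 1 else 0)) \<and>
                        (\<forall>i<n. \<forall>k<n. (\<Sum>l<n. B i l * A l k) = (if i = k then 1 else 0)))"

definition DJ_equiv :: "(nat \<Rightarrow> nat) \<Rightarrow> (nat \<times> nat \<Rightarrow> nat \<Rightarrow> bit) \<Rightarrow> (nat \<times> nat \<Rightarrow> nat \<Rightarrow> bit) \<Rightarrow> bool" where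
  "DJ_equiv a lam lam' \<longleftrightarrow>
     (\<exists>A. GL_Z2 (hdim a) A \<and>
          (\<forall>j\<in>hV a. \<forall>i<hdim a. lam' j i = (\<Sum>k<hdim a. A i k * lam j k)))"

definition in_Zn :: "nat \<Rightarrow> (nat \<Rightarrow> int) \<Rightarrow> bool" where
  "in_Zn n x \<longleftrightarrow> (\<forall>i\<ge>n. x i = 0)"

definition in_Rn :: "nat \<Rightarrow> (nat \<Rightarrow> real) \<Rightarrow> bool" where
  "in_Rn n x \<longleftrightarrow> (\<forall>i\<ge>n. x i = 0)"

definition Z_basis :: "nat \<Rightarrow> (nat \<Rightarrow> int) set \<Rightarrow> bool" where
  "Z_basis n B \<longleftrightarrow> finite B \<and> card B = n \<and> (\<forall>b\<in>B. in_Zn n b) \<and>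
     (\<forall>x. in_Zn n x \<longrightarrow> (\<exists>c :: (nat \<Rightarrow> int) \<Rightarrow> int. \<forall>i. x i = (\<Sum>b\<in>B. c b * b i)))"

definition ray_cone :: "('v \<Rightarrow> nat \<Rightarrow> int) \<Rightarrow> 'v set \<Rightarrow> (nat \<Rightarrow> real) set" where
  "ray_cone u S = {x. \<exists>c :: 'v \<Rightarrow> real. (\<forall>j\<in>S. c j \<ge> 0) \<and>
                          (\<forall>i. x i = (\<Sum>j\<in>S. c j * real_of_int (u j i)))}"

text \<open>u (the ray generators, indexed by V) defines a complete non-singular fan over K:
  each face of K spans a cone generated by part of a Z-basis of Z^n (non-singular, and
  in particular simplicial with primitive generators), the cones over two faces meet in
  the cone over their intersection (fan), and the cones cover R^n (complete).\<close>
definition complete_nonsing_fan :: "(nat \<Rightarrow> nat) \<Rightarrow> (nat \<times> nat \<Rightarrow> nat \<Rightarrow> int) \<Rightarrow> bool" where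
  "complete_nonsing_fan a u \<longleftrightarrow>
     (\<forall>j\<in>hV a. in_Zn (hdim a) (u j)) \<and>
     (\<forall>I. hface a I \<longrightarrow> inj_on u I \<and> (\<exists>B. Z_basis (hdim a) B \<and> u ` I \<subseteq> B)) \<and>
     (\<forall>I J. hface a I \<longrightarrow> hface a J \<longrightarrow> ray_cone u I \<inter> ray_cone u J = ray_cone u (I \<inter> J)) \<and>
     (\<Union>{ray_cone u I | I. hface a I}) = {x. in_Rn (hdim a) x}"

definition mod2 :: "(nat \<times> nat \<Rightarrow> nat \<Rightarrow> int) \<Rightarrow> nat \<times> nat \<Rightarrow> nat \<Rightarrow> bit" where
  "mod2 u j i = of_int (u j i)"

definition real_toric :: "(nat \<Rightarrow> nat) \<Rightarrow> (nat \<times> nat \<Rightarrow> nat \<Rightarrow> bit) \<Rightarrow> bool" where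
  "real_toric a lam \<longleftrightarrow> (\<exists>u. complete_nonsing_fan a u \<and> DJ_equiv a (mod2 u) lam)"

end

theory Submission
  imports Defs "Jordan_Normal_Form.Determinant"
begin


lemma la_mat_mult:
  fixes P D :: "nat \<Rightarrow> nat \<Rightarrow> 'a::comm_ring_1"
  shows "mat n n (\<lambda>(i,j). P i j) * mat n n (\<lambda>(i,j). D i j) = mat n n (\<lambda>(i,k). \<Sum>l<n. P i l * D l k)"
  by (rule eq_matI) (auto simp: scalar_prod_def row_def col_def lessThan_atLeast0 intro!: sum.cong)

lemma la_inverse:
  fixes P D :: "nat \<Rightarrow> nat \<Rightarrow> 'a::field"
  assumes "\<forall>i<n. \<forall>k<n. (\<Sum>l<n. P i l * D l k) = (if i=k then 1 else 0)"
  shows "\<forall>i<n. \<forall>k<n. (\<Sum>l<n. D i l * P l k) = (if i=k then 1 else 0)"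
proof -
  let ?A = "mat n n (\<lambda>(i,j). P i j)" and ?B = "mat n n (\<lambda>(i,j). D i j)"
  have "?A * ?B = 1\<^sub>m n" unfolding la_mat_mult
  proof (rule eq_matI)
    fix i j assume ij: "i < dim_row (1\<^sub>m n :: 'a mat)" "j < dim_col (1\<^sub>m n :: 'a mat)"
    then have "i < n" "j < n" by auto
    then have "(\<Sum>l<n. P i l * D l j) = (if i=j then 1 else 0)" using assms by blast
    then show "mat n n (\<lambda>(i,k). \<Sum>l<n. P i l * D l k) $$ (i,j) = 1\<^sub>m n $$ (i,j)"
      using \<open>i<n\<close> \<open>j<n\<close> by simp
  qed auto
  then have "?B * ?A = 1\<^sub>m n" by (rule mat_mult_left_right_inverse[OF mat_carrier mat_carrier])
  then have "\<forall>i<n. \<forall>k<n. (?B * ?A) $$ (i,k) = 1\<^sub>m n $$ (i,k)" by simp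
  then show ?thesis unfolding la_mat_mult by simp
qed

lemma la_inv_of_indep:
  fixes P :: "nat \<Rightarrow> nat \<Rightarrow> 'a::field"
  assumes "\<forall>c. (\<forall>i<n. (\<Sum>l<n. P i l * c l) = 0) \<longrightarrow> (\<forall>l<n. c l = 0)"
  shows "\<exists>D. (\<forall>i<n. \<forall>k<n. (\<Sum>l<n. P i l * D l k) = (if i=k then 1 else 0)) \<and>
             (\<forall>i<n. \<forall>k<n. (\<Sum>l<n. D i l * P l k) = (if i=k then 1 else 0))"
proof -
  let ?A = "mat n n (\<lambda>(i,j). P i j)"
  have A: "?A \<in> carrier_mat n n" by simp
  have "det ?A \<noteq> 0"
  proof
    assume "det ?A = 0"
    then obtain v where v: "v \<in> carrier_vec n" "v \<noteq> 0\<^sub>v n" "?A *\<^sub>v v = 0\<^sub>v n"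
      using det_0_iff_vec_prod_zero_field[OF A] by auto
    have "\<forall>i<n. (\<Sum>l<n. P i l * v $ l) = 0"
    proof (intro allI impI)
      fix i assume i: "i < n"
      have "(?A *\<^sub>v v) $ i = 0" using v(3) i by simp
      then show "(\<Sum>l<n. P i l * v $ l) = 0" using i v(1)
        by (simp add: scalar_prod_def row_def lessThan_atLeast0)
    qed
    then have "\<forall>l<n. v $ l = 0" using assms by blast
    then have "v = 0\<^sub>v n" using v(1) by (intro eq_vecI) auto
    then show False using v(2) by simp
  qed
  from det_non_zero_imp_unit[OF A this, of "()"]
  obtain B where B: "B \<in> carrier_mat n n" "?A * B = 1\<^sub>m n"
    unfolding Units_def ring_mat_def by auto
  define D where "D = (\<lambda>i j. B $$ (i,j))"
  have "B = mat n n (\<lambda>(i,j). D i j)" using B(1) by (intro eq_matI) (auto simp: D_def)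
  with B(2) have M0: "?A * mat n n (\<lambda>(i,j). D i j) = 1\<^sub>m n" by simp
  have M: "mat n n (\<lambda>(i,k). \<Sum>l<n. P i l * D l k) = 1\<^sub>m n"
    using M0 by (simp only: la_mat_mult)
  have "\<forall>i<n. \<forall>k<n. (\<Sum>l<n. P i l * D l k) = (if i=k then 1 else 0)"
  proof (intro allI impI)
    fix i k assume "i < n" "k < n"
    then have "mat n n (\<lambda>(i,k). \<Sum>l<n. P i l * D l k) $$ (i,k) = 1\<^sub>m n $$ (i,k)" using M by simp
    then show "(\<Sum>l<n. P i l * D l k) = (if i=k then 1 else 0)" using \<open>i<n\<close> \<open>k<n\<close> by simp
  qed
  then show ?thesis using la_inverse by blast
qed



definition rel :: "nat \<Rightarrow> ('v \<Rightarrow> nat \<Rightarrow> 'a::field) \<Rightarrow> 'v set \<Rightarrow> ('v \<Rightarrow> 'a) \<Rightarrow> bool" where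
  "rel n w S l \<longleftrightarrow> (\<forall>i<n. (\<Sum>v\<in>S. l v * w v i) = 0)"

definition indep_on :: "nat \<Rightarrow> ('v \<Rightarrow> nat \<Rightarrow> 'a::field) \<Rightarrow> 'v set \<Rightarrow> bool" where
  "indep_on n w S \<longleftrightarrow> (\<forall>l. rel n w S l \<longrightarrow> (\<forall>v\<in>S. l v = 0))"

lemma sum_bij_reindex:
  assumes "bij_betw e {..<n} F"
  shows "(\<Sum>v\<in>F. f v) = (\<Sum>l<n. f (e l))"
  using sum.reindex_bij_betw[OF assms, of f] by simp

lemma span_of_indep:
  fixes w :: "'v \<Rightarrow> nat \<Rightarrow> 'a::field"
  assumes e: "bij_betw e {..<n} F" and ind: "indep_on n w F"
  shows "\<exists>c. \<forall>i<n. x i = (\<Sum>v\<in>F. c v * w v i)"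
proof -
  define P where "P = (\<lambda>i l. w (e l) i)"
  define ei where "ei = the_inv_into {..<n} e"
  have eiv: "v \<in> F \<Longrightarrow> e (ei v) = v" for v
    unfolding ei_def using e by (simp add: bij_betw_def f_the_inv_into_f)
  have eie: "l < n \<Longrightarrow> ei (e l) = l" for l
    unfolding ei_def using e by (simp add: bij_betw_def the_inv_into_f_f)
  have "\<forall>c. (\<forall>i<n. (\<Sum>l<n. P i l * c l) = 0) \<longrightarrow> (\<forall>l<n. c l = 0)"
  proof (intro allI impI)
    fix c l assume h: "\<forall>i<n. (\<Sum>l<n. P i l * c l) = 0" and l: "l < n"
    have "rel n w F (\<lambda>v. c (ei v))" unfolding rel_def
    proof (intro allI impI)
      fix i assume "i < n"
      have "(\<Sum>v\<in>F. c (ei v) * w v i) = (\<Sum>l<n. c (ei (e l)) * w (e l) i)"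
        by (rule sum_bij_reindex[OF e])
      also have "\<dots> = (\<Sum>l<n. P i l * c l)" unfolding P_def by (rule sum.cong) (auto simp: eie)
      finally show "(\<Sum>v\<in>F. c (ei v) * w v i) = 0" using h \<open>i<n\<close> by simp
    qed
    then have "c (ei (e l)) = 0" using ind e l unfolding indep_on_def bij_betw_def by auto
    then show "c l = 0" using eie l by simp
  qed
  from la_inv_of_indep[OF this] obtain D where
    D: "\<forall>i<n. \<forall>k<n. (\<Sum>l<n. P i l * D l k) = (if i=k then 1 else 0)" by blast
  define c where "c = (\<lambda>l. \<Sum>k<n. D l k * x k)"
  show ?thesis
  proof (intro exI allI impI)
    fix i assume i: "i < n"
    have "(\<Sum>v\<in>F. c (ei v) * w v i) = (\<Sum>l<n. c (ei (e l)) * w (e l) i)"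
      by (rule sum_bij_reindex[OF e])
    also have "\<dots> = (\<Sum>l<n. P i l * c l)" unfolding P_def by (rule sum.cong) (auto simp: eie)
    also have "\<dots> = (\<Sum>l<n. \<Sum>k<n. P i l * D l k * x k)"
      unfolding c_def by (simp add: sum_distrib_left mult.assoc)
    also have "\<dots> = (\<Sum>k<n. (\<Sum>l<n. P i l * D l k) * x k)"
      by (subst sum.swap) (simp add: sum_distrib_right)
    also have "\<dots> = (\<Sum>k<n. (if i = k then x k else 0))"
      using D i by (intro sum.cong) auto
    also have "\<dots> = x i" using i by simp
    finally show "x i = (\<Sum>v\<in>F. c (ei v) * w v i)" by simp
  qed
qed

lemma indep_of_span:
  fixes w :: "'v \<Rightarrow> nat \<Rightarrow> 'a::field"
  assumes e: "bij_betw e {..<n} F"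
    and sp: "\<forall>k<n. \<exists>d. \<forall>i<n. (if i = k then 1 else 0) = (\<Sum>v\<in>F. d v * w v i)"
  shows "indep_on n w F"
proof -
  obtain d where d: "\<forall>k<n. \<forall>i<n. (if i = k then 1 else 0) = (\<Sum>v\<in>F. d k v * w v i)"
    using sp by metis
  define P where "P = (\<lambda>i l. w (e l) i)"
  define D where "D = (\<lambda>l k. d k (e l))"
  have "\<forall>i<n. \<forall>k<n. (\<Sum>l<n. P i l * D l k) = (if i=k then 1 else 0)"
  proof (intro allI impI)
    fix i k assume "i < n" "k < n"
    have "(\<Sum>v\<in>F. d k v * w v i) = (\<Sum>l<n. d k (e l) * w (e l) i)" by (rule sum_bij_reindex[OF e])
    then show "(\<Sum>l<n. P i l * D l k) = (if i=k then 1 else 0)"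
      using d \<open>i<n\<close> \<open>k<n\<close> unfolding P_def D_def by (simp add: mult.commute)
  qed
  from la_inverse[OF this] have DP: "\<forall>i<n. \<forall>k<n. (\<Sum>l<n. D i l * P l k) = (if i=k then 1 else 0)" .
  show ?thesis unfolding indep_on_def
  proof (intro allI impI ballI)
    fix c v assume r: "rel n w F c" and v: "v \<in> F"
    obtain k where k: "k < n" "v = e k" using e v unfolding bij_betw_def by auto
    have z: "\<forall>i<n. (\<Sum>l<n. P i l * c (e l)) = 0"
    proof (intro allI impI)
      fix i assume "i<n"
      have "(\<Sum>v\<in>F. c v * w v i) = (\<Sum>l<n. c (e l) * w (e l) i)" by (rule sum_bij_reindex[OF e])
      then show "(\<Sum>l<n. P i l * c (e l)) = 0" using r \<open>i<n\<close> unfolding rel_def P_def by (simp add: mult.commute)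
    qed
    have "(\<Sum>l<n. (if k = l then 1 else 0) * c (e l)) = (\<Sum>l<n. if k = l then c (e l) else 0)"
      by (rule sum.cong) auto
    then have "c (e k) = (\<Sum>l<n. (if k = l then 1 else 0) * c (e l))" using k by simp
    also have "\<dots> = (\<Sum>l<n. (\<Sum>i<n. D k i * P i l) * c (e l))"
      using DP k by (intro sum.cong) auto
    also have "\<dots> = (\<Sum>i<n. D k i * (\<Sum>l<n. P i l * c (e l)))"
      by (simp add: sum_distrib_left sum_distrib_right mult.assoc) (rule sum.swap)
    also have "\<dots> = 0" using z by simp
    finally show "c v = 0" using k by simp
  qed
qed

lemma indep_on_subset: "indep_on n w S \<Longrightarrow> T \<subseteq> S \<Longrightarrow> finite S \<Longrightarrow> indep_on n w T"
  unfolding indep_on_def rel_def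
proof (intro allI impI ballI)
  fix l v assume h: "\<forall>l. (\<forall>i<n. (\<Sum>v\<in>S. l v * w v i) = 0) \<longrightarrow> (\<forall>v\<in>S. l v = 0)"
    and T: "T \<subseteq> S" "finite S" and r: "\<forall>i<n. (\<Sum>v\<in>T. l v * w v i) = 0" and v: "v \<in> T"
  let ?l = "\<lambda>v. if v \<in> T then l v else 0"
  have "\<forall>i<n. (\<Sum>v\<in>S. ?l v * w v i) = 0"
  proof (intro allI impI)
    fix i assume "i<n"
    have "(\<Sum>v\<in>S. ?l v * w v i) = (\<Sum>v\<in>T. l v * w v i)"
      using T by (intro sum.mono_neutral_cong_right) auto
    then show "(\<Sum>v\<in>S. ?l v * w v i) = 0" using r \<open>i<n\<close> by simp
  qed
  then have "\<forall>v\<in>S. ?l v = 0" using spec[OF h, of ?l] by (rule mp[rotated])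
  then have "?l v = 0" using v T by blast
  then show "l v = 0" using v by simp
qed

lemma sum_V4:
  assumes "finite F0" "r1 \<notin> F0" "r2 \<notin> F0" "r3 \<notin> F0" "r1 \<noteq> r2" "r1 \<noteq> r3" "r2 \<noteq> r3"
  shows "(\<Sum>v\<in>insert r1 (insert r2 (insert r3 F0)). f v) = f r1 + f r2 + f r3 + (\<Sum>v\<in>F0. f v)"
  using assms by (simp add: add.assoc)

definition gal :: "'v set \<Rightarrow> 'v \<Rightarrow> ('v \<Rightarrow> 'a::field) \<Rightarrow> 'v \<Rightarrow> 'a" where
  "gal F0 r c v = (if v = r then 1 else 0) - (if v \<in> F0 then c v else 0)"

lemma gale_rel:
  fixes w :: "'v \<Rightarrow> nat \<Rightarrow> 'a::field"
  assumes V: "V = insert r1 (insert r2 (insert r3 F0))" "finite F0"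
    "r1 \<notin> F0" "r2 \<notin> F0" "r3 \<notin> F0" "r1 \<noteq> r2" "r1 \<noteq> r3" "r2 \<noteq> r3"
    and r: "r \<in> {r1,r2,r3}" and c: "\<forall>i<n. w r i = (\<Sum>v\<in>F0. c v * w v i)"
  shows "rel n w V (gal F0 r c)"
  unfolding rel_def
proof (intro allI impI)
  fix i assume i: "i < n"
  have rF: "r \<notin> F0" using r V by auto
  have g: "\<And>v. v \<in> F0 \<Longrightarrow> gal F0 r c v = - c v" using rF unfolding gal_def by auto
  have "(\<Sum>v\<in>V. gal F0 r c v * w v i) = gal F0 r c r1 * w r1 i + gal F0 r c r2 * w r2 i
      + gal F0 r c r3 * w r3 i + (\<Sum>v\<in>F0. gal F0 r c v * w v i)"
    using V by (simp add: sum_V4)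
  also have "(\<Sum>v\<in>F0. gal F0 r c v * w v i) = - (\<Sum>v\<in>F0. c v * w v i)"
    using g by (simp add: sum_negf[symmetric])
  also have "gal F0 r c r1 * w r1 i + gal F0 r c r2 * w r2 i + gal F0 r c r3 * w r3 i = w r i"
    using r V unfolding gal_def by auto
  finally show "(\<Sum>v\<in>V. gal F0 r c v * w v i) = 0" using c i by simp
qed

lemma rel_lin:
  assumes "rel n w S l1" "rel n w S l2"
  shows "rel n w S (\<lambda>v. a * l1 v + b * l2 v)"
  using assms unfolding rel_def
  by (simp add: distrib_right sum.distrib mult.assoc sum_distrib_left[symmetric])

lemma rel_zero: "rel n w S (\<lambda>v. 0)" unfolding rel_def by simp

lemma gal_at:
  assumes "r \<notin> F0" "v \<notin> F0"
  shows "gal F0 r c v = (if v = r then 1 else 0)"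
  using assms unfolding gal_def by auto

lemma gale_expand:
  fixes w :: "'v \<Rightarrow> nat \<Rightarrow> 'a::field"
  assumes V: "V = insert r1 (insert r2 (insert r3 F0))" "finite F0"
    "r1 \<notin> F0" "r2 \<notin> F0" "r3 \<notin> F0" "r1 \<noteq> r2" "r1 \<noteq> r3" "r2 \<noteq> r3"
    and ind: "indep_on n w F0"
    and c1: "\<forall>i<n. w r1 i = (\<Sum>v\<in>F0. c1 v * w v i)"
    and c2: "\<forall>i<n. w r2 i = (\<Sum>v\<in>F0. c2 v * w v i)"
    and c3: "\<forall>i<n. w r3 i = (\<Sum>v\<in>F0. c3 v * w v i)"
    and l: "rel n w V l" and v: "v \<in> V"
  shows "l v = l r1 * gal F0 r1 c1 v + l r2 * gal F0 r2 c2 v + l r3 * gal F0 r3 c3 v"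
proof -
  have g1: "rel n w V (gal F0 r1 c1)" by (rule gale_rel[OF V _ c1]) auto
  have g2: "rel n w V (gal F0 r2 c2)" by (rule gale_rel[OF V _ c2]) auto
  have g3: "rel n w V (gal F0 r3 c3)" by (rule gale_rel[OF V _ c3]) auto
  define L where "L = (\<lambda>v. 1 * l v + (- 1) * (l r1 * gal F0 r1 c1 v + l r2 * gal F0 r2 c2 v + l r3 * gal F0 r3 c3 v))"
  have "rel n w V (\<lambda>v. l r1 * gal F0 r1 c1 v + l r2 * gal F0 r2 c2 v)"
    by (rule rel_lin[OF g1 g2])
  then have "rel n w V (\<lambda>v. 1 * (l r1 * gal F0 r1 c1 v + l r2 * gal F0 r2 c2 v) + l r3 * gal F0 r3 c3 v)"
    by (rule rel_lin[OF _ g3])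
  then have "rel n w V (\<lambda>v. l r1 * gal F0 r1 c1 v + l r2 * gal F0 r2 c2 v + l r3 * gal F0 r3 c3 v)" by simp
  then have RL: "rel n w V L" unfolding L_def by (rule rel_lin[OF l])
  have L1: "L r1 = 0" "L r2 = 0" "L r3 = 0" using V unfolding L_def by (auto simp: gal_at)
  have "rel n w F0 L" using RL unfolding rel_def using V L1 by (simp add: sum_V4)
  then have "\<forall>u\<in>F0. L u = 0" using ind unfolding indep_on_def by blast
  then have "L v = 0" using L1 v V by auto
  then show ?thesis unfolding L_def by (simp add: algebra_simps)
qed



definition goodtri :: "(nat \<times> nat \<times> nat) set" where
  "goodtri = {(1,2,5),(1,3,5),(1,3,6),(1,4,5),(1,4,6),(1,4,7),(2,3,6),(2,4,6),(2,4,7),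
              (2,5,6),(2,5,7),(3,4,7),(3,5,7),(3,6,7)}"

lemma sin_identity:
  "complex_of_real (sin (C - B)) * cis A + complex_of_real (sin (A - C)) * cis B
     + complex_of_real (sin (B - A)) * cis C = 0"
  by (simp add: complex_eq_iff sin_diff algebra_simps)

lemma zero_in_hull3:
  assumes "s1 > 0" "s2 > 0" "s3 > 0" "s1 *\<^sub>R p + s2 *\<^sub>R q + s3 *\<^sub>R r = (0::complex)"
  shows "0 \<in> convex hull {p, q, r}"
proof -
  let ?S = "s1 + s2 + s3"
  have S: "?S > 0" using assms by simp
  have "(s1/?S) *\<^sub>R p + (s2/?S) *\<^sub>R q + (s3/?S) *\<^sub>R r = (1/?S) *\<^sub>R (s1 *\<^sub>R p + s2 *\<^sub>R q + s3 *\<^sub>R r)"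
    by (simp add: scaleR_add_right)
  also have "\<dots> = 0" using assms(4) by simp
  finally have e: "(s1/?S) *\<^sub>R p + (s2/?S) *\<^sub>R q + (s3/?S) *\<^sub>R r = 0" .
  have "s1/?S + s2/?S + s3/?S = 1" using S by (simp add: add_divide_distrib[symmetric])
  then show ?thesis unfolding convex_hull_3 using e assms S
    by (intro CollectI exI[of _ "s1/?S"] exI[of _ "s2/?S"] exI[of _ "s3/?S"]) auto
qed

lemma sin_pos7: "(k::nat) \<in> {1,2,3} \<Longrightarrow> sin (2 * pi * real k / 7) > 0"
  by (rule sin_gt_zero) auto

lemma sin_neg7: "(k::nat) \<in> {4,5,6} \<Longrightarrow> sin (2 * pi * real k / 7) < 0"
  by (rule sin_lt_zero) auto

lemma good_hull_gen:
  assumes "x < y" "y < z" "y - x \<in> {1,2,3}" "z - y \<in> {1,2,3}" "z - x \<in> {4,5,6}"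
  shows "0 \<in> convex hull {hept_vert x, hept_vert y, hept_vert z}"
proof -
  define A where "A = 2 * pi * real x / 7"
  define B where "B = 2 * pi * real y / 7"
  define C where "C = 2 * pi * real z / 7"
  have "C - B = 2 * pi * real (z - y) / 7" using assms unfolding B_def C_def by (simp add: of_nat_diff field_simps)
  note e1 = this
  have s1: "sin (C - B) > 0" unfolding e1 using sin_pos7[of "z-y"] assms(4) by simp
  have "C - A = 2 * pi * real (z - x) / 7" using assms unfolding A_def C_def by (simp add: of_nat_diff field_simps)
  note e2 = this
  have "sin (C - A) < 0" unfolding e2 using sin_neg7[of "z-x"] assms(5) by simp
  then have s2: "sin (A - C) > 0" by (simp add: sin_diff sin_diff[of C A] algebra_simps)
  have "B - A = 2 * pi * real (y - x) / 7" using assms unfolding A_def B_def by (simp add: of_nat_diff field_simps)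
  note e3 = this
  have s3: "sin (B - A) > 0" unfolding e3 using sin_pos7[of "y-x"] assms(3) by simp
  have "sin (C - B) *\<^sub>R cis A + sin (A - C) *\<^sub>R cis B + sin (B - A) *\<^sub>R cis C = 0"
    using sin_identity[of C B A] by (simp add: scaleR_conv_of_real)
  then show ?thesis using zero_in_hull3[OF s1 s2 s3] unfolding hept_vert_def A_def B_def C_def by simp
qed

lemma good_hull:
  assumes "(x,y,z) \<in> goodtri"
  shows "0 \<in> convex hull {hept_vert x, hept_vert y, hept_vert z}"
  using assms unfolding goodtri_def by (auto intro!: good_hull_gen)

lemma inner_cis: "inner (cis a) (cis b) = cos (a - b)"
  by (simp add: inner_complex_def cos_diff)

lemma cos_q_pos: "q < (4::nat) \<Longrightarrow> cos (pi * (3 - 2 * real q) / 7) > 0"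
proof (rule cos_gt_zero_pi)
  assume q: "q < 4"
  have p: "pi > 0" by simp
  have "real q \<le> 3" using q by simp
  then show "- (pi / 2) < pi * (3 - 2 * real q) / 7" using p by (simp add: field_simps)
  have "pi * (3 - 2 * real q) / 7 \<le> pi * 3 / 7" using p by (intro divide_right_mono mult_left_mono) auto
  then show "pi * (3 - 2 * real q) / 7 < pi / 2" using p by linarith
qed

lemma halfplane:
  assumes "k \<in> {1..7}" "j \<in> {1..7}" "(j + 7 - k) mod 7 < 4"
  shows "inner (cis (pi * (2 * real k + 3) / 7)) (hept_vert j) > 0"
proof -
  define q where "q = (j + 7 - k) mod 7"
  have q: "q < 4" using assms q_def by simp
  have k7: "k \<in> {1,2,3,4,5,6,7}" and j7: "j \<in> {1,2,3,4,5,6,7}" using assms(1,2) by auto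
  have "j = k + q \<or> j + 7 = k + q" using k7 j7 unfolding q_def by auto
  then consider "real j = real k + real q" | "real j = real k + real q - 7"
    by (metis add_diff_cancel_right' of_nat_add of_nat_numeral)
  then show ?thesis
  proof cases
    case 1
    have "pi * (2 * real k + 3) / 7 - 2 * pi * real j / 7 = pi * (3 - 2 * real q) / 7"
      using 1 by (simp add: field_simps)
    note e = this
    show ?thesis unfolding hept_vert_def inner_cis e using cos_q_pos[OF q] by simp
  next
    case 2
    have "pi * (2 * real k + 3) / 7 - 2 * pi * real j / 7 = pi * (2 * real k + 3) / 7 - 2 * pi * (real k + real q - 7) / 7"
      using 2 by simp
    also have "\<dots> = pi * (3 - 2 * real q) / 7 + 2 * pi" by (simp add: field_simps)
    finally have e: "pi * (2 * real k + 3) / 7 - 2 * pi * real j / 7 = pi * (3 - 2 * real q) / 7 + 2 * pi" .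
    show ?thesis unfolding hept_vert_def inner_cis e using cos_q_pos[OF q] by (simp add: cos_periodic)
  qed
qed

lemma prop7:
  "\<not>(b1\<and>b2\<and>b5) \<Longrightarrow> \<not>(b1\<and>b3\<and>b5) \<Longrightarrow> \<not>(b1\<and>b3\<and>b6) \<Longrightarrow> \<not>(b1\<and>b4\<and>b5) \<Longrightarrow>
   \<not>(b1\<and>b4\<and>b6) \<Longrightarrow> \<not>(b1\<and>b4\<and>b7) \<Longrightarrow> \<not>(b2\<and>b3\<and>b6) \<Longrightarrow> \<not>(b2\<and>b4\<and>b6) \<Longrightarrow>
   \<not>(b2\<and>b4\<and>b7) \<Longrightarrow> \<not>(b2\<and>b5\<and>b6) \<Longrightarrow> \<not>(b2\<and>b5\<and>b7) \<Longrightarrow> \<not>(b3\<and>b4\<and>b7) \<Longrightarrow>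
   \<not>(b3\<and>b5\<and>b7) \<Longrightarrow> \<not>(b3\<and>b6\<and>b7) \<Longrightarrow>
   (\<not>b5\<and>\<not>b6\<and>\<not>b7) \<or> (\<not>b6\<and>\<not>b7\<and>\<not>b1) \<or> (\<not>b7\<and>\<not>b1\<and>\<not>b2) \<or> (\<not>b1\<and>\<not>b2\<and>\<not>b3) \<or>
   (\<not>b2\<and>\<not>b3\<and>\<not>b4) \<or> (\<not>b3\<and>\<not>b4\<and>\<not>b5) \<or> (\<not>b4\<and>\<not>b5\<and>\<not>b6)"
  by (cases b1; cases b2; cases b3; cases b4; cases b5; cases b6; cases b7) simp_all

lemma not_hull_halfplane:
  assumes "k \<in> {1..7}" "S \<subseteq> {1..7}" "\<forall>j\<in>S. (j + 7 - k) mod 7 < 4"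
  shows "0 \<notin> convex hull (hept_vert ` S)"
proof
  let ?d = "cis (pi * (2 * real k + 3) / 7)"
  assume "0 \<in> convex hull (hept_vert ` S)"
  moreover have "convex hull (hept_vert ` S) \<subseteq> {x. inner ?d x > 0}"
    by (rule hull_minimal) (use assms halfplane in \<open>auto intro: convex_halfspace_gt\<close>)
  ultimately show False by auto
qed

lemma hull_good:
  assumes S: "S \<subseteq> {1..7}" and h: "0 \<in> convex hull (hept_vert ` S)"
  shows "\<exists>x y z. (x,y,z) \<in> goodtri \<and> x \<in> S \<and> y \<in> S \<and> z \<in> S"
proof (rule ccontr)
  assume "\<not> ?thesis"
  then have ng: "\<forall>x y z. (x,y,z) \<in> goodtri \<longrightarrow> \<not>(x \<in> S \<and> y \<in> S \<and> z \<in> S)" by blast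
  have d: "(5\<notin>S\<and>6\<notin>S\<and>7\<notin>S) \<or> (6\<notin>S\<and>7\<notin>S\<and>1\<notin>S) \<or> (7\<notin>S\<and>1\<notin>S\<and>2\<notin>S) \<or>
     (1\<notin>S\<and>2\<notin>S\<and>3\<notin>S) \<or> (2\<notin>S\<and>3\<notin>S\<and>4\<notin>S) \<or> (3\<notin>S\<and>4\<notin>S\<and>5\<notin>S) \<or> (4\<notin>S\<and>5\<notin>S\<and>6\<notin>S)"
    by (rule prop7) (use ng in \<open>auto simp: goodtri_def\<close>)
  have S7: "\<And>j. j \<in> S \<Longrightarrow> j = 1 \<or> j = 2 \<or> j = 3 \<or> j = 4 \<or> j = 5 \<or> j = 6 \<or> j = 7"
    using S by auto
  have "\<exists>k\<in>{1..7}. \<forall>j\<in>S. (j + 7 - k) mod 7 < 4"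
  proof -
    from d consider "5\<notin>S\<and>6\<notin>S\<and>7\<notin>S" | "6\<notin>S\<and>7\<notin>S\<and>1\<notin>S" | "7\<notin>S\<and>1\<notin>S\<and>2\<notin>S" |
     "1\<notin>S\<and>2\<notin>S\<and>3\<notin>S" | "2\<notin>S\<and>3\<notin>S\<and>4\<notin>S" | "3\<notin>S\<and>4\<notin>S\<and>5\<notin>S" | "4\<notin>S\<and>5\<notin>S\<and>6\<notin>S"
      by blast
    then show ?thesis
    proof cases
      case 1 then show ?thesis by (intro bexI[of _ 1]) (use S7 in fastforce)+
    next
      case 2 then show ?thesis by (intro bexI[of _ 2]) (use S7 in fastforce)+
    next
      case 3 then show ?thesis by (intro bexI[of _ 3]) (use S7 in fastforce)+
    next
      case 4 then show ?thesis by (intro bexI[of _ 4]) (use S7 in fastforce)+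
    next
      case 5 then show ?thesis by (intro bexI[of _ 5]) (use S7 in fastforce)+
    next
      case 6 then show ?thesis by (intro bexI[of _ 6]) (use S7 in fastforce)+
    next
      case 7 then show ?thesis by (intro bexI[of _ 7]) (use S7 in fastforce)+
    qed
  qed
  then obtain k where "k \<in> {1..7}" "\<forall>j\<in>S. (j + 7 - k) mod 7 < 4" by blast
  from not_hull_halfplane[OF this(1) S this(2)] h show False by simp
qed



fun det3 :: "'a::comm_ring_1 \<times> 'a \<times> 'a \<Rightarrow> 'a \<times> 'a \<times> 'a \<Rightarrow> 'a \<times> 'a \<times> 'a \<Rightarrow> 'a" where
  "det3 (a1,a2,a3) (b1,b2,b3) (c1,c2,c3) = a1*(b2*c3 - b3*c2) - a2*(b1*c3 - b3*c1) + a3*(b1*c2 - b2*c1)"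

fun dot3 :: "'a::comm_ring_1 \<times> 'a \<times> 'a \<Rightarrow> 'a \<times> 'a \<times> 'a \<Rightarrow> 'a" where
  "dot3 (a1,a2,a3) (b1,b2,b3) = a1*b1 + a2*b2 + a3*b3"

definition ind3 :: "bit \<times> bit \<times> bit \<Rightarrow> bit \<times> bit \<times> bit \<Rightarrow> bit \<times> bit \<times> bit \<Rightarrow> bool" where
  "ind3 x y z \<longleftrightarrow> (\<forall>p. p \<noteq> (0,0,0) \<longrightarrow> \<not> (dot3 p x = 0 \<and> dot3 p y = 0 \<and> dot3 p z = 0))"

lemma bit_all: "(\<forall>x::bit. P x) \<longleftrightarrow> P 0 \<and> P 1"
  by (metis bit_not_zero_iff)

lemma bit_ex: "(\<exists>x::bit. P x) \<longleftrightarrow> P 0 \<or> P 1"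
  by (metis bit_not_zero_iff)

lemma prod3_all: "(\<forall>p::'a\<times>'b\<times>'c. P p) \<longleftrightarrow> (\<forall>a b c. P (a,b,c))" by auto

lemma ind3_iff_all: "\<forall>a1 a2 a3 b1 b2 b3 c1 c2 c3.
   ind3 (a1,a2,a3) (b1,b2,b3) (c1,c2,c3) \<longleftrightarrow> det3 (a1,a2,a3) (b1,b2,b3) (c1,c2,c3) = 1"
  unfolding ind3_def prod3_all bit_all by simp

lemma ind3_iff: "ind3 x y z \<longleftrightarrow> det3 x y z = 1"
  using ind3_iff_all by (cases x; cases y; cases z) blast

definition gsol :: "nat \<Rightarrow> nat \<Rightarrow> bit \<times> bit \<times> bit" where
  "gsol k i = (if i = 1 then (1,0,0) else if i = 2 then (0,1,0) else if i = 5 then (0,0,1)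
     else if i = 3 then (if k = 1 then (0,1,1) else (1,1,1))
     else if i = 4 then (if k = 1 then (1,1,0) else (0,1,1))
     else if i = 6 then (if k = 1 then (1,0,1) else (1,1,0))
     else (if k = 1 then (1,1,1) else (1,0,1)))"

definition validg :: "(nat \<Rightarrow> bit \<times> bit \<times> bit) \<Rightarrow> bool" where
  "validg g \<longleftrightarrow> (\<forall>(x,y,z)\<in>goodtri. det3 (g x) (g y) (g z) = 1)"

lemma validg_expand: "validg g \<longleftrightarrow>
  det3 (g 1) (g 2) (g 5) = 1 \<and> det3 (g 1) (g 3) (g 5) = 1 \<and> det3 (g 1) (g 3) (g 6) = 1 \<and>
  det3 (g 1) (g 4) (g 5) = 1 \<and> det3 (g 1) (g 4) (g 6) = 1 \<and> det3 (g 1) (g 4) (g 7) = 1 \<and>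
  det3 (g 2) (g 3) (g 6) = 1 \<and> det3 (g 2) (g 4) (g 6) = 1 \<and> det3 (g 2) (g 4) (g 7) = 1 \<and>
  det3 (g 2) (g 5) (g 6) = 1 \<and> det3 (g 2) (g 5) (g 7) = 1 \<and> det3 (g 3) (g 4) (g 7) = 1 \<and>
  det3 (g 3) (g 5) (g 7) = 1 \<and> det3 (g 3) (g 6) (g 7) = 1"
  unfolding validg_def goodtri_def by simp

lemma gsol_simps:
  "gsol 1 1 = (1,0,0)"
  "gsol 1 2 = (0,1,0)"
  "gsol 1 3 = (0,1,1)"
  "gsol 1 4 = (1,1,0)"
  "gsol 1 5 = (0,0,1)"
  "gsol 1 6 = (1,0,1)"
  "gsol 1 7 = (1,1,1)"
  "gsol 2 1 = (1,0,0)"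
  "gsol 2 2 = (0,1,0)"
  "gsol 2 3 = (1,1,1)"
  "gsol 2 4 = (0,1,1)"
  "gsol 2 5 = (0,0,1)"
  "gsol 2 6 = (1,1,0)"
  "gsol 2 7 = (1,0,1)"
  by (simp_all add: gsol_def)

lemmas gsol_simps' = gsol_simps gsol_simps[unfolded One_nat_def]

lemma gsol_valid: "k \<in> {1,2} \<Longrightarrow> validg (gsol k)"
  unfolding validg_expand by (auto simp: gsol_simps')

lemma gsol_124: "det3 (gsol 1 1) (gsol 1 2) (gsol 1 4) = 0" "det3 (gsol 2 1) (gsol 2 2) (gsol 2 4) = 1"
  by (simp_all add: gsol_simps')

lemma classify_all: "\<forall>a1 a3 b1 b3 c2 c3 d2 d3 :: bit.
   g 1 = (1,0,0) \<longrightarrow> g 2 = (0,1,0) \<longrightarrow> g 5 = (0,0,1) \<longrightarrow> g 3 = (a1,1,a3) \<longrightarrow> g 4 = (b1,1,b3) \<longrightarrow>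
   g 6 = (1,c2,c3) \<longrightarrow> g 7 = (1,d2,d3) \<longrightarrow> validg g
   \<longrightarrow> (g 3 = gsol 1 3 \<and> g 4 = gsol 1 4 \<and> g 6 = gsol 1 6 \<and> g 7 = gsol 1 7) \<or>
       (g 3 = gsol 2 3 \<and> g 4 = gsol 2 4 \<and> g 6 = gsol 2 6 \<and> g 7 = gsol 2 7)"
  unfolding validg_expand bit_all by (simp add: gsol_simps')

lemma classify:
  assumes "validg g" "g 1 = (1,0,0)" "g 2 = (0,1,0)" "g 5 = (0,0,1)"
  shows "(\<forall>i\<in>{1..7}. g i = gsol 1 i) \<or> (\<forall>i\<in>{1..7}. g i = gsol 2 i)"
proof -
  obtain a1 a2 a3 where a: "g 3 = (a1,a2,a3)" by (cases "g 3") auto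
  obtain b1 b2 b3 where b: "g 4 = (b1,b2,b3)" by (cases "g 4") auto
  obtain c1 c2 c3 where c: "g 6 = (c1,c2,c3)" by (cases "g 6") auto
  obtain d1 d2 d3 where d: "g 7 = (d1,d2,d3)" by (cases "g 7") auto
  have v: "det3 (g 1) (g 3) (g 5) = 1" "det3 (g 1) (g 4) (g 5) = 1" "det3 (g 2) (g 5) (g 6) = 1" "det3 (g 2) (g 5) (g 7) = 1"
    using assms(1) unfolding validg_expand by simp_all
  then have e: "a2 = 1" "b2 = 1" "c1 = 1" "d1 = 1" using assms a b c d by simp_all
  have "(g 3 = gsol 1 3 \<and> g 4 = gsol 1 4 \<and> g 6 = gsol 1 6 \<and> g 7 = gsol 1 7) \<or>
       (g 3 = gsol 2 3 \<and> g 4 = gsol 2 4 \<and> g 6 = gsol 2 6 \<and> g 7 = gsol 2 7)"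
    using classify_all[of g, rule_format, of a1 a3 b1 b3 c2 c3 d2 d3] assms a b c d e by blast
  then show ?thesis
  proof
    assume H: "g 3 = gsol 1 3 \<and> g 4 = gsol 1 4 \<and> g 6 = gsol 1 6 \<and> g 7 = gsol 1 7"
    have "g i = gsol 1 i" if "i \<in> {1..7}" for i
    proof -
      have "i \<in> {1,2,3,4,5,6,7}" using that by auto
      then show ?thesis using H assms by (auto simp: gsol_simps')
    qed
    then show ?thesis by blast
  next
    assume H: "g 3 = gsol 2 3 \<and> g 4 = gsol 2 4 \<and> g 6 = gsol 2 6 \<and> g 7 = gsol 2 7"
    have "g i = gsol 2 i" if "i \<in> {1..7}" for i
    proof -
      have "i \<in> {1,2,3,4,5,6,7}" using that by auto
      then show ?thesis using H assms by (auto simp: gsol_simps')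
    qed
    then show ?thesis by blast
  qed
qed

lemma const_1_1: "\<forall>x1 x2 x3. validg ((gsol 1)(1 := (x1,x2,x3))) \<longrightarrow> (x1,x2,x3) = gsol 1 1"
  unfolding validg_expand bit_all by (simp add: gsol_simps')

lemma const_1_2: "\<forall>x1 x2 x3. validg ((gsol 1)(2 := (x1,x2,x3))) \<longrightarrow> (x1,x2,x3) = gsol 1 2"
  unfolding validg_expand bit_all by (simp add: gsol_simps')

lemma const_1_3: "\<forall>x1 x2 x3. validg ((gsol 1)(3 := (x1,x2,x3))) \<longrightarrow> (x1,x2,x3) = gsol 1 3"
  unfolding validg_expand bit_all by (simp add: gsol_simps')

lemma const_1_4: "\<forall>x1 x2 x3. validg ((gsol 1)(4 := (x1,x2,x3))) \<longrightarrow> (x1,x2,x3) = gsol 1 4"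
  unfolding validg_expand bit_all by (simp add: gsol_simps')

lemma const_1_5: "\<forall>x1 x2 x3. validg ((gsol 1)(5 := (x1,x2,x3))) \<longrightarrow> (x1,x2,x3) = gsol 1 5"
  unfolding validg_expand bit_all by (simp add: gsol_simps')

lemma const_1_6: "\<forall>x1 x2 x3. validg ((gsol 1)(6 := (x1,x2,x3))) \<longrightarrow> (x1,x2,x3) = gsol 1 6"
  unfolding validg_expand bit_all by (simp add: gsol_simps')

lemma const_1_7: "\<forall>x1 x2 x3. validg ((gsol 1)(7 := (x1,x2,x3))) \<longrightarrow> (x1,x2,x3) = gsol 1 7"
  unfolding validg_expand bit_all by (simp add: gsol_simps')

lemma const_2_1: "\<forall>x1 x2 x3. validg ((gsol 2)(1 := (x1,x2,x3))) \<longrightarrow> (x1,x2,x3) = gsol 2 1"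
  unfolding validg_expand bit_all by (simp add: gsol_simps')

lemma const_2_2: "\<forall>x1 x2 x3. validg ((gsol 2)(2 := (x1,x2,x3))) \<longrightarrow> (x1,x2,x3) = gsol 2 2"
  unfolding validg_expand bit_all by (simp add: gsol_simps')

lemma const_2_3: "\<forall>x1 x2 x3. validg ((gsol 2)(3 := (x1,x2,x3))) \<longrightarrow> (x1,x2,x3) = gsol 2 3"
  unfolding validg_expand bit_all by (simp add: gsol_simps')

lemma const_2_4: "\<forall>x1 x2 x3. validg ((gsol 2)(4 := (x1,x2,x3))) \<longrightarrow> (x1,x2,x3) = gsol 2 4"
  unfolding validg_expand bit_all by (simp add: gsol_simps')

lemma const_2_5: "\<forall>x1 x2 x3. validg ((gsol 2)(5 := (x1,x2,x3))) \<longrightarrow> (x1,x2,x3) = gsol 2 5"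
  unfolding validg_expand bit_all by (simp add: gsol_simps')

lemma const_2_6: "\<forall>x1 x2 x3. validg ((gsol 2)(6 := (x1,x2,x3))) \<longrightarrow> (x1,x2,x3) = gsol 2 6"
  unfolding validg_expand bit_all by (simp add: gsol_simps')

lemma const_2_7: "\<forall>x1 x2 x3. validg ((gsol 2)(7 := (x1,x2,x3))) \<longrightarrow> (x1,x2,x3) = gsol 2 7"
  unfolding validg_expand bit_all by (simp add: gsol_simps')

lemma const:
  assumes "k \<in> {1,2}" "i \<in> {1..7}" "validg ((gsol k)(i := x))"
  shows "x = gsol k i"
proof -
  have "i \<in> {1,2,3,4,5,6,7}" using assms(2) by auto
  then show ?thesis using assms(1) const_1_1 const_1_2 const_1_3 const_1_4 const_1_5 const_1_6 const_1_7 const_2_1 const_2_2 const_2_3 const_2_4 const_2_5 const_2_6 const_2_7 assms(3) by (cases x) auto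
qed



lemma intcore:
  fixes g :: "nat \<Rightarrow> int \<times> int \<times> int"
  assumes e: "g 1 = (1,0,0)" "g 2 = (0,1,0)" "g 5 = (0,0,1)"
    and d: "\<forall>(x,y,z)\<in>goodtri. det3 (g x) (g y) (g z) = 1"
  shows False
proof -
  obtain p p2 q where a: "g 3 = (p,p2,q)" by (cases "g 3") auto
  obtain r q2 s where b: "g 4 = (r,q2,s)" by (cases "g 4") auto
  obtain r1 t u where c: "g 6 = (r1,t,u)" by (cases "g 6") auto
  obtain s1 v w where f: "g 7 = (s1,v,w)" by (cases "g 7") auto
  have D: "det3 (g 1) (g 3) (g 5) = 1" "det3 (g 1) (g 3) (g 6) = 1"
    "det3 (g 1) (g 4) (g 5) = 1" "det3 (g 1) (g 4) (g 6) = 1" "det3 (g 1) (g 4) (g 7) = 1"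
    "det3 (g 2) (g 3) (g 6) = 1" "det3 (g 2) (g 4) (g 6) = 1" "det3 (g 2) (g 4) (g 7) = 1"
    "det3 (g 2) (g 5) (g 6) = 1" "det3 (g 2) (g 5) (g 7) = 1" "det3 (g 3) (g 4) (g 7) = 1"
    "det3 (g 3) (g 5) (g 7) = 1" "det3 (g 3) (g 6) (g 7) = 1"
    using d unfolding goodtri_def by simp_all
  have p2: "p2 = 1" using D(1) unfolding e a by simp
  have q2: "q2 = 1" using D(3) unfolding e b by simp
  have r1: "r1 = 1" using D(9) unfolding e c by simp
  have s1: "s1 = 1" using D(10) unfolding e f by simp
  have E1: "u - q * t = 1" using D(2) p2 unfolding e a c by simp
  have E2: "u - s * t = 1" using D(4) q2 unfolding e b c by simp
  have E3: "w - s * v = 1" using D(5) q2 unfolding e b f by simp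
  have E4: "q - p * u = 1" using D(6) r1 unfolding e a c by (simp add: algebra_simps)
  have E5: "s - r * u = 1" using D(7) r1 unfolding e b c by (simp add: algebra_simps)
  have E6: "s - r * w = 1" using D(8) s1 unfolding e b f by (simp add: algebra_simps)
  have E7: "v * p = 0" using D(12) p2 s1 unfolding e a f by (simp add: algebra_simps)
  have E8: "p * (w - s * v) - (r * w - s) + q * (r * v - 1) = 1"
    using D(11) p2 q2 s1 unfolding a b f by simp
  have E9: "p * (t * w - u * v) - (w - u) + q * (v - t) = 1"
    using D(13) p2 r1 s1 unfolding a c f by simp
  show False
  proof (cases "p = 0")
    case True
    have q: "q = 1" using E4 True by simp
    have rv: "r * v = 1" using E8 E6 True q by (simp add: algebra_simps)
    have "r * (u - w) = 0" using E5 E6 by (simp add: algebra_simps)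
    moreover have "r \<noteq> 0" using rv by auto
    ultimately have uw: "u = w" by simp
    have vt: "v - t = 1" using E9 True uw q by simp
    have u: "u = 1 + t" using E1 q by simp
    have ts: "t = s * v" using E3 uw u by simp
    have "t * (1 - s) = 0" using E2 u by (simp add: algebra_simps)
    then consider "t = 0" | "s = 1" by auto
    then show False
    proof cases
      case 1
      then have "v = 1" using vt by simp
      then have "r = 1" using rv by simp
      have "s = 0" using ts 1 \<open>v = 1\<close> by simp
      then show False using E5 \<open>r = 1\<close> u 1 by simp
    next
      case 2
      then show False using ts vt by simp
    qed
  next
    case False
    then have v: "v = 0" using E7 by simp
    have w: "w = 1" using E3 v by simp
    have "p * t + u - 1 - q * t = 1" using E9 v w by (simp add: algebra_simps)
    then have pt: "p * t = 1" using E1 by simp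
    then have "t \<noteq> 0" by auto
    moreover have "t * (q - s) = 0" using E1 E2 by (simp add: algebra_simps)
    ultimately have qs: "q = s" by simp
    have sr: "s - r = 1" using E6 w by simp
    have "p - r + s - q = 1" using E8 v w by (simp add: algebra_simps)
    then have pr: "p - r = 1" using qs by simp
    have "r * (u - 1) = 0" using E5 sr by (simp add: algebra_simps)
    then consider "r = 0" | "u = 1" by auto
    then show False
    proof cases
      case 1
      then have "s = 1" "p = 1" using sr pr by simp_all
      then have "t = 1" using pt by simp
      have "u = 2" using E1 qs \<open>s = 1\<close> \<open>t = 1\<close> by simp
      then show False using E4 qs \<open>s = 1\<close> \<open>p = 1\<close> by simp
    next
      case 2
      then have "q * t = 0" using E1 by simp
      then have "q = 0" using \<open>t \<noteq> 0\<close> by simp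
      then have "p = -1" using E4 2 by simp
      then show False using sr pr qs \<open>q = 0\<close> by simp
    qed
  qed
qed



lemma lin_indep_Z2_eq: "lin_indep_Z2 n lam S \<longleftrightarrow> indep_on n lam S"
  unfolding lin_indep_Z2_def indep_on_def rel_def by simp

locale hept =
  fixes a :: "nat \<Rightarrow> nat"
  assumes pos: "\<forall>i\<in>{1..7}. a i > 0"
begin

abbreviation "V \<equiv> hV a"
abbreviation "n \<equiv> hdim a"

lemma V_eq: "V = (\<Union>i\<in>{1..7}. {i} \<times> {..<a i})"
  unfolding hV_def by auto

lemma finV: "finite V" unfolding V_eq by auto

lemma rep_in: "i \<in> {1..7} \<Longrightarrow> (i,0) \<in> V"
  using pos unfolding hV_def by auto

lemma mem_V: "v \<in> V \<Longrightarrow> fst v \<in> {1..7}"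
  unfolding hV_def by auto

lemma card_V: "card V \<ge> 7"
proof -
  have "(\<lambda>i. (i,0::nat)) ` {1..7} \<subseteq> V" using rep_in by auto
  moreover have "card ((\<lambda>i. (i,0::nat)) ` {1..7::nat}) = 7" by (subst card_image) (auto simp: inj_on_def)
  ultimately show ?thesis using card_mono[OF finV] by metis
qed

lemma goodtri_distinct: "(i,j,k) \<in> goodtri \<Longrightarrow> i \<noteq> j \<and> i \<noteq> k \<and> j \<noteq> k \<and> i \<in> {1..7} \<and> j \<in> {1..7} \<and> k \<in> {1..7}"
  unfolding goodtri_def by auto

lemma card_trans:
  assumes "x \<in> V" "y \<in> V" "z \<in> V" "(fst x, fst y, fst z) \<in> goodtri"
  shows "card (V - {x,y,z}) = n"
proof -
  have "x \<noteq> y" "x \<noteq> z" "y \<noteq> z" using goodtri_distinct[OF assms(4)] by auto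
  then have "card {x,y,z} = 3" by simp
  then show ?thesis unfolding hdim_def using assms finV by (simp add: card_Diff_subset)
qed

lemma face_trans:
  assumes "x \<in> V" "y \<in> V" "z \<in> V" "(fst x, fst y, fst z) \<in> goodtri"
  shows "hface a (V - {x,y,z})"
proof -
  have "V - (V - {x,y,z}) = {x,y,z}" using assms by auto
  then have "hphi ` (V - (V - {x,y,z})) = {hept_vert (fst x), hept_vert (fst y), hept_vert (fst z)}"
    unfolding hphi_def by auto
  then show ?thesis unfolding hface_def using good_hull[OF assms(4)] by auto
qed

lemma face_contains:
  assumes "hface a I"
  shows "\<exists>x y z. x \<in> V - I \<and> y \<in> V - I \<and> z \<in> V - I \<and> (fst x, fst y, fst z) \<in> goodtri"
proof -
  have S: "fst ` (V - I) \<subseteq> {1..7}" using mem_V by auto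
  have "hphi ` (V - I) = hept_vert ` (fst ` (V - I))" unfolding hphi_def by (simp add: image_image)
  then have "0 \<in> convex hull (hept_vert ` (fst ` (V - I)))" using assms unfolding hface_def by simp
  from hull_good[OF S this] obtain i j k where "(i,j,k) \<in> goodtri" "i \<in> fst ` (V - I)" "j \<in> fst ` (V - I)" "k \<in> fst ` (V - I)"
    by blast
  then show ?thesis by force
qed

lemma bij_trans:
  assumes "x \<in> V" "y \<in> V" "z \<in> V" "(fst x, fst y, fst z) \<in> goodtri"
  shows "\<exists>e. bij_betw e {..<n} (V - {x,y,z})"
proof -
  have "finite (V - {x,y,z})" using finV by simp
  from ex_bij_betw_nat_finite[OF this] card_trans[OF assms] show ?thesis
    by (metis lessThan_atLeast0)
qed

abbreviation "r1 \<equiv> (1::nat, 0::nat)"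
abbreviation "r2 \<equiv> (2::nat, 0::nat)"
abbreviation "r5 \<equiv> (5::nat, 0::nat)"

definition F0 :: "(nat \<times> nat) set" where "F0 = V - {r1, r2, r5}"

lemma r_in: "r1 \<in> V" "r2 \<in> V" "r5 \<in> V" using rep_in by auto

lemma good125: "(fst r1, fst r2, fst r5) \<in> goodtri" unfolding goodtri_def by simp

lemma F0_face: "hface a F0" unfolding F0_def using face_trans[OF r_in good125] .

lemma F0_facts: "V = insert r1 (insert r2 (insert r5 F0))" "finite F0"
    "r1 \<notin> F0" "r2 \<notin> F0" "r5 \<notin> F0" "r1 \<noteq> r2" "r1 \<noteq> r5" "r2 \<noteq> r5"
  unfolding F0_def using r_in finV by auto

lemma F0_bij: "\<exists>e. bij_betw e {..<n} F0" unfolding F0_def using bij_trans[OF r_in good125] .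


definition GV :: "('v \<Rightarrow> 'b::field) \<Rightarrow> ('v \<Rightarrow> 'b) \<Rightarrow> ('v \<Rightarrow> 'b) \<Rightarrow> 'v \<Rightarrow> 'b \<times> 'b \<times> 'b" where
  "GV g1 g2 g3 v = (g1 v, g2 v, g3 v)"

lemma dot3_GV: "dot3 (p1,p2,p3) (GV g1 g2 g3 v) = p1 * g1 v + p2 * g2 v + p3 * g3 v"
  unfolding GV_def by (simp add: mult.commute)

lemma gale_crit:
  fixes w :: "nat \<times> nat \<Rightarrow> nat \<Rightarrow> 'b::field"
  assumes ind: "indep_on n w F0"
    and c1: "\<forall>i<n. w r1 i = (\<Sum>v\<in>F0. c1 v * w v i)"
    and c2: "\<forall>i<n. w r2 i = (\<Sum>v\<in>F0. c2 v * w v i)"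
    and c5: "\<forall>i<n. w r5 i = (\<Sum>v\<in>F0. c5 v * w v i)"
    and xyz: "x \<in> V" "y \<in> V" "z \<in> V"
  defines "G \<equiv> GV (gal F0 r1 c1) (gal F0 r2 c2) (gal F0 r5 c5)"
  shows "indep_on n w (V - {x,y,z}) \<longleftrightarrow>
     (\<forall>p1 p2 p3. dot3 (p1,p2,p3) (G x) = 0 \<and> dot3 (p1,p2,p3) (G y) = 0 \<and> dot3 (p1,p2,p3) (G z) = 0
        \<longrightarrow> p1 = 0 \<and> p2 = 0 \<and> p3 = 0)"
proof -
  note FF = F0_facts
  have g1: "rel n w V (gal F0 r1 c1)" by (rule gale_rel[OF FF _ c1]) auto
  have g2: "rel n w V (gal F0 r2 c2)" by (rule gale_rel[OF FF _ c2]) auto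
  have g3: "rel n w V (gal F0 r5 c5)" by (rule gale_rel[OF FF _ c5]) auto
  have combo: "rel n w V (\<lambda>v. p1 * gal F0 r1 c1 v + p2 * gal F0 r2 c2 v + p3 * gal F0 r5 c5 v)" for p1 p2 p3
  proof -
    have "rel n w V (\<lambda>v. p1 * gal F0 r1 c1 v + p2 * gal F0 r2 c2 v)" by (rule rel_lin[OF g1 g2])
    from rel_lin[OF this g3, of 1 p3] show ?thesis by simp
  qed
  have galr: "gal F0 r1 c1 r1 = 1" "gal F0 r1 c1 r2 = 0" "gal F0 r1 c1 r5 = 0"
     "gal F0 r2 c2 r1 = 0" "gal F0 r2 c2 r2 = 1" "gal F0 r2 c2 r5 = 0"
     "gal F0 r5 c5 r1 = 0" "gal F0 r5 c5 r2 = 0" "gal F0 r5 c5 r5 = 1"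
    using FF by (simp_all add: gal_at)
  let ?S = "V - {x,y,z}"
  have sumS: "(\<Sum>v\<in>V. l v * w v i) = (\<Sum>v\<in>?S. l v * w v i)" if "l x = 0" "l y = 0" "l z = 0" for l :: "_ \<Rightarrow> 'b" and i
    using that finV by (intro sum.mono_neutral_cong_right) auto
  show ?thesis
  proof
    assume I: "indep_on n w ?S"
    show "\<forall>p1 p2 p3. dot3 (p1,p2,p3) (G x) = 0 \<and> dot3 (p1,p2,p3) (G y) = 0 \<and> dot3 (p1,p2,p3) (G z) = 0
        \<longrightarrow> p1 = 0 \<and> p2 = 0 \<and> p3 = 0"
    proof (intro allI impI)
      fix p1 p2 p3
      assume h: "dot3 (p1,p2,p3) (G x) = 0 \<and> dot3 (p1,p2,p3) (G y) = 0 \<and> dot3 (p1,p2,p3) (G z) = 0"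
      define l where "l = (\<lambda>v. p1 * gal F0 r1 c1 v + p2 * gal F0 r2 c2 v + p3 * gal F0 r5 c5 v)"
      have lG: "l v = dot3 (p1,p2,p3) (G v)" for v unfolding l_def G_def dot3_GV ..
      have R: "rel n w V l" unfolding l_def by (rule combo)
      have lz: "l x = 0" "l y = 0" "l z = 0" using h lG by auto
      have "rel n w ?S l" using R unfolding rel_def using sumS[OF lz] by simp
      then have "\<forall>v\<in>?S. l v = 0" using I unfolding indep_on_def by blast
      then have lV: "\<forall>v\<in>V. l v = 0" using lz by auto
      have "l r1 = p1" "l r2 = p2" "l r5 = p3" unfolding l_def using galr by simp_all
      then show "p1 = 0 \<and> p2 = 0 \<and> p3 = 0" using lV r_in by auto
    qed
  next
    assume H: "\<forall>p1 p2 p3. dot3 (p1,p2,p3) (G x) = 0 \<and> dot3 (p1,p2,p3) (G y) = 0 \<and> dot3 (p1,p2,p3) (G z) = 0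
        \<longrightarrow> p1 = 0 \<and> p2 = 0 \<and> p3 = 0"
    show "indep_on n w ?S" unfolding indep_on_def
    proof (intro allI impI ballI)
      fix l v assume R: "rel n w ?S l" and v: "v \<in> ?S"
      define l' where "l' = (\<lambda>v. if v \<in> ?S then l v else 0)"
      have lz: "l' x = 0" "l' y = 0" "l' z = 0" unfolding l'_def by auto
      have "rel n w V l'" using R unfolding rel_def using sumS[OF lz] by (simp add: l'_def)
      then have ex: "\<And>u. u \<in> V \<Longrightarrow> l' u = l' r1 * gal F0 r1 c1 u + l' r2 * gal F0 r2 c2 u + l' r5 * gal F0 r5 c5 u"
        using gale_expand[OF FF ind c1 c2 c5] by blast
      have d: "dot3 (l' r1, l' r2, l' r5) (G u) = l' u" if "u \<in> V" for u
        unfolding G_def dot3_GV using ex[OF that] by simp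
      have "dot3 (l' r1, l' r2, l' r5) (G x) = 0 \<and> dot3 (l' r1, l' r2, l' r5) (G y) = 0 \<and> dot3 (l' r1, l' r2, l' r5) (G z) = 0"
        using d[OF xyz(1)] d[OF xyz(2)] d[OF xyz(3)] lz by simp
      then have "l' r1 = 0 \<and> l' r2 = 0 \<and> l' r5 = 0" using H by blast
      then have "l' v = 0" using ex[of v] v by simp
      then show "l v = 0" using v unfolding l'_def by simp
    qed
  qed
qed

end



lemma bit_neg: "- (x::bit) = x"
  by (metis bit_not_zero_iff add_0_right one_add_one bit_2_eq_0 minus_zero neg_eq_iff_add_eq_0 numeral_One add.commute)

lemma lin_transfer:
  fixes lam lam' :: "'v \<Rightarrow> nat \<Rightarrow> 'b::field"
  assumes eq: "\<forall>v\<in>S. \<forall>i<n. lam' v i = (\<Sum>k<n. A i k * lam v k)" and ind: "indep_on n lam' S"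
  shows "indep_on n lam S"
  unfolding indep_on_def
proof (intro allI impI)
  fix l assume R: "rel n lam S l"
  have "rel n lam' S l" unfolding rel_def
  proof (intro allI impI)
    fix i assume i: "i < n"
    have "(\<Sum>v\<in>S. l v * lam' v i) = (\<Sum>v\<in>S. \<Sum>k<n. A i k * (l v * lam v k))"
      using eq i by (intro sum.cong) (auto simp: sum_distrib_left algebra_simps)
    also have "\<dots> = (\<Sum>k<n. A i k * (\<Sum>v\<in>S. l v * lam v k))"
      by (subst sum.swap) (simp add: sum_distrib_left)
    also have "\<dots> = 0" using R unfolding rel_def by simp
    finally show "(\<Sum>v\<in>S. l v * lam' v i) = 0" .
  qed
  then show "\<forall>v\<in>S. l v = 0" using ind unfolding indep_on_def by blast
qed

lemma indep_cols:
  fixes w :: "'v \<Rightarrow> nat \<Rightarrow> 'b::field"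
  assumes ind: "indep_on n w F" and e: "bij_betw e {..<n} F"
  shows "\<forall>c. (\<forall>i<n. (\<Sum>l<n. w (e l) i * c l) = 0) \<longrightarrow> (\<forall>l<n. c l = 0)"
proof (intro allI impI)
  fix c l assume h: "\<forall>i<n. (\<Sum>l<n. w (e l) i * c l) = 0" and l: "l < n"
  define ei where "ei = the_inv_into {..<n} e"
  have eie: "k < n \<Longrightarrow> ei (e k) = k" for k
    unfolding ei_def using e by (simp add: bij_betw_def the_inv_into_f_f)
  have "rel n w F (\<lambda>v. c (ei v))" unfolding rel_def
  proof (intro allI impI)
    fix i assume "i < n"
    have "(\<Sum>v\<in>F. c (ei v) * w v i) = (\<Sum>k<n. c (ei (e k)) * w (e k) i)"
      by (rule sum_bij_reindex[OF e])
    also have "\<dots> = (\<Sum>k<n. w (e k) i * c k)" by (rule sum.cong) (auto simp: eie mult.commute)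
    finally show "(\<Sum>v\<in>F. c (ei v) * w v i) = 0" using h \<open>i<n\<close> by simp
  qed
  then have "c (ei (e l)) = 0" using ind e l unfolding indep_on_def bij_betw_def by auto
  then show "c l = 0" using eie l by simp
qed

lemma gsol_fixed: "gsol k 1 = (1,0,0)" "gsol k (Suc 0) = (1,0,0)" "gsol k 2 = (0,1,0)" "gsol k 5 = (0,0,1)"
  by (simp_all add: gsol_def)

context hept
begin

definition e0 :: "nat \<Rightarrow> nat \<times> nat" where "e0 = (SOME e. bij_betw e {..<n} F0)"

lemma e0_bij: "bij_betw e0 {..<n} F0"
  unfolding e0_def using F0_bij by (rule someI_ex)

definition comp :: "nat \<Rightarrow> nat \<times> nat \<Rightarrow> bit \<times> bit \<times> bit \<Rightarrow> bit" where
  "comp t r x = (if r = r1 then fst x else if r = r2 then fst (snd x) else snd (snd x))"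

definition lamk :: "nat \<Rightarrow> nat \<times> nat \<Rightarrow> nat \<Rightarrow> bit" where
  "lamk k v i = (if i < n then (if v \<in> F0 then (if v = e0 i then 1 else 0)
      else comp 0 v (gsol k (fst (e0 i)))) else 0)"

lemma sum_F0_lamk: "i < n \<Longrightarrow> (\<Sum>v\<in>F0. f v * lamk k v i) = f (e0 i)"
proof -
  assume i: "i < n"
  have "e0 i \<in> F0" using e0_bij i unfolding bij_betw_def by auto
  then have "(\<Sum>v\<in>F0. f v * lamk k v i) = (\<Sum>v\<in>F0. if v = e0 i then f v else 0)"
    using i unfolding lamk_def by (intro sum.cong) auto
  also have "\<dots> = f (e0 i)" using \<open>e0 i \<in> F0\<close> F0_facts(2) by (simp add: sum.delta')
  finally show ?thesis .
qed

lemma lamk_indep_F0: "indep_on n (lamk k) F0"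
  unfolding indep_on_def rel_def
proof (intro allI impI ballI)
  fix l v assume h: "\<forall>i<n. (\<Sum>v\<in>F0. l v * lamk k v i) = 0" and v: "v \<in> F0"
  obtain i where "i < n" "v = e0 i" using e0_bij v unfolding bij_betw_def by auto
  then show "l v = 0" using h sum_F0_lamk by metis
qed

definition Ck :: "nat \<Rightarrow> nat \<times> nat \<Rightarrow> nat \<times> nat \<Rightarrow> bit" where
  "Ck k r v = comp 0 r (gsol k (fst v))"

lemma lamk_exp: "r \<in> {r1,r2,r5} \<Longrightarrow> \<forall>i<n. lamk k r i = (\<Sum>v\<in>F0. Ck k r v * lamk k v i)"
proof (intro allI impI)
  fix i assume r: "r \<in> {r1,r2,r5}" and i: "i < n"
  have "r \<notin> F0" using r F0_facts by auto
  then have "lamk k r i = Ck k r (e0 i)" using i unfolding lamk_def Ck_def by simp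
  then show "lamk k r i = (\<Sum>v\<in>F0. Ck k r v * lamk k v i)" using sum_F0_lamk[OF i] by simp
qed

lemma lamk_G: "v \<in> V \<Longrightarrow> GV (gal F0 r1 (Ck k r1)) (gal F0 r2 (Ck k r2)) (gal F0 r5 (Ck k r5)) v = gsol k (fst v)"
proof -
  assume v: "v \<in> V"
  show ?thesis
  proof (cases "v \<in> F0")
    case True
    then have "v \<noteq> r1" "v \<noteq> r2" "v \<noteq> r5" using F0_facts by auto
    obtain p q r where pqr: "gsol k (fst v) = (p,q,r)" by (cases "gsol k (fst v)") auto
    show ?thesis using True \<open>v \<noteq> r1\<close> \<open>v \<noteq> r2\<close> \<open>v \<noteq> r5\<close> unfolding GV_def gal_def Ck_def comp_def pqr
      by (simp only: bit_neg if_True if_False simp_thms diff_0 prod.sel) simp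
  next
    case False
    then have "v = r1 \<or> v = r2 \<or> v = r5" using v F0_facts by auto
    then show ?thesis using False F0_facts unfolding GV_def gal_def by (auto simp: gsol_fixed)
  qed
qed

lemma lamk_indep_trans:
  assumes "x \<in> V" "y \<in> V" "z \<in> V" "det3 (gsol k (fst x)) (gsol k (fst y)) (gsol k (fst z)) = 1"
  shows "indep_on n (lamk k) (V - {x,y,z})"
proof -
  have E1: "\<forall>i<n. lamk k r1 i = (\<Sum>v\<in>F0. Ck k r1 v * lamk k v i)" by (rule lamk_exp) simp
  have E2: "\<forall>i<n. lamk k r2 i = (\<Sum>v\<in>F0. Ck k r2 v * lamk k v i)" by (rule lamk_exp) simp
  have E5: "\<forall>i<n. lamk k r5 i = (\<Sum>v\<in>F0. Ck k r5 v * lamk k v i)" by (rule lamk_exp) simp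
  have "ind3 (gsol k (fst x)) (gsol k (fst y)) (gsol k (fst z))" using assms(4) ind3_iff by blast
  then have "\<forall>p1 p2 p3. dot3 (p1,p2,p3) (gsol k (fst x)) = 0 \<and> dot3 (p1,p2,p3) (gsol k (fst y)) = 0 \<and>
      dot3 (p1,p2,p3) (gsol k (fst z)) = 0 \<longrightarrow> p1 = 0 \<and> p2 = 0 \<and> p3 = 0"
    unfolding ind3_def by blast
  moreover note gale_crit[OF lamk_indep_F0 E1 E2 E5 assms(1-3)]
  ultimately show ?thesis unfolding lamk_G[OF assms(1)] lamk_G[OF assms(2)] lamk_G[OF assms(3)] by blast
qed

lemma lamk_char: "k \<in> {1,2} \<Longrightarrow> char_map_Z2 a (lamk k)"
  unfolding char_map_Z2_def
proof (intro conjI ballI allI impI)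
  fix j assume "j \<in> V" show "in_Z2n n (lamk k j)" unfolding in_Z2n_def lamk_def by simp
next
  fix I assume k: "k \<in> {1,2}" and I: "hface a I"
  obtain x y z where xyz: "x \<in> V - I" "y \<in> V - I" "z \<in> V - I" "(fst x, fst y, fst z) \<in> goodtri"
    using face_contains[OF I] by blast
  have "det3 (gsol k (fst x)) (gsol k (fst y)) (gsol k (fst z)) = 1"
    using gsol_valid[OF k] xyz(4) unfolding validg_def by auto
  then have "indep_on n (lamk k) (V - {x,y,z})" using lamk_indep_trans xyz by auto
  moreover have "I \<subseteq> V - {x,y,z}" using I xyz unfolding hface_def by auto
  ultimately show "lin_indep_Z2 n (lamk k) I" unfolding lin_indep_Z2_eq
    using indep_on_subset finV by blast
qed

lemma lamk_not_equiv: "\<not> DJ_equiv a (lamk 1) (lamk 2)"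
proof
  assume "DJ_equiv a (lamk 1) (lamk 2)"
  then obtain A where eq: "\<forall>j\<in>V. \<forall>i<n. lamk 2 j i = (\<Sum>k<n. A i k * lamk 1 j k)"
    unfolding DJ_equiv_def by blast
  let ?x = "r1" and ?y = "r2" and ?z = "(4::nat,0::nat)"
  have xyz: "?x \<in> V" "?y \<in> V" "?z \<in> V" using rep_in by auto
  have I2: "indep_on n (lamk 2) (V - {?x,?y,?z})"
    using lamk_indep_trans[OF xyz] gsol_124(2) by simp
  have eq2: "\<forall>v\<in>V - {?x,?y,?z}. \<forall>i<n. lamk 2 v i = (\<Sum>k<n. A i k * lamk 1 v k)" using eq by blast
  have I1: "indep_on n (lamk 1) (V - {?x,?y,?z})" by (rule lin_transfer[OF eq2 I2])
  have E1: "\<forall>i<n. lamk 1 r1 i = (\<Sum>v\<in>F0. Ck 1 r1 v * lamk 1 v i)" by (rule lamk_exp) simp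
  have E2: "\<forall>i<n. lamk 1 r2 i = (\<Sum>v\<in>F0. Ck 1 r2 v * lamk 1 v i)" by (rule lamk_exp) simp
  have E5: "\<forall>i<n. lamk 1 r5 i = (\<Sum>v\<in>F0. Ck 1 r5 v * lamk 1 v i)" by (rule lamk_exp) simp
  note C = gale_crit[OF lamk_indep_F0 E1 E2 E5 xyz]
  have "\<forall>p1 p2 p3. dot3 (p1,p2,p3) (gsol 1 (fst ?x)) = 0 \<and> dot3 (p1,p2,p3) (gsol 1 (fst ?y)) = 0 \<and>
      dot3 (p1,p2,p3) (gsol 1 (fst ?z)) = 0 \<longrightarrow> p1 = 0 \<and> p2 = 0 \<and> p3 = 0"
    using C I1 unfolding lamk_G[OF xyz(1)] lamk_G[OF xyz(2)] lamk_G[OF xyz(3)] by blast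
  from this[rule_format, of 0 0 1] show False by (simp add: gsol_simps')
qed

end



lemma gal_in: "v \<in> F \<Longrightarrow> r \<notin> F \<Longrightarrow> gal F r c v = - c v"
  unfolding gal_def by auto

lemma gal_in_bit: "v \<in> F \<Longrightarrow> r \<notin> F \<Longrightarrow> gal F r (c :: _ \<Rightarrow> bit) v = c v"
  using gal_in[of v F r c] bit_neg by metis

context hept
begin

lemma charmap_indep:
  assumes "char_map_Z2 a lam" "hface a I"
  shows "indep_on n lam I"
  using assms unfolding char_map_Z2_def lin_indep_Z2_eq by blast

lemma classify_lam:
  assumes cm: "char_map_Z2 a lam"
  shows "\<exists>k\<in>{1,2}. DJ_equiv a (lamk k) lam"
proof -
  have I0: "indep_on n lam F0" using charmap_indep[OF cm F0_face] .
  obtain c1 where c1: "\<forall>i<n. lam r1 i = (\<Sum>v\<in>F0. c1 v * lam v i)"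
    using span_of_indep[OF e0_bij I0, of "lam r1"] by blast
  obtain c2 where c2: "\<forall>i<n. lam r2 i = (\<Sum>v\<in>F0. c2 v * lam v i)"
    using span_of_indep[OF e0_bij I0, of "lam r2"] by blast
  obtain c5 where c5: "\<forall>i<n. lam r5 i = (\<Sum>v\<in>F0. c5 v * lam v i)"
    using span_of_indep[OF e0_bij I0, of "lam r5"] by blast
  define G where "G = GV (gal F0 r1 c1) (gal F0 r2 c2) (gal F0 r5 c5)"
  have detG: "det3 (G x) (G y) (G z) = 1"
    if xyz: "x \<in> V" "y \<in> V" "z \<in> V" "(fst x, fst y, fst z) \<in> goodtri" for x y z
  proof -
    have "indep_on n lam (V - {x,y,z})" using charmap_indep[OF cm face_trans[OF xyz]] .
    then have H: "\<forall>p1 p2 p3. dot3 (p1,p2,p3) (G x) = 0 \<and> dot3 (p1,p2,p3) (G y) = 0 \<and> dot3 (p1,p2,p3) (G z) = 0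
        \<longrightarrow> p1 = 0 \<and> p2 = 0 \<and> p3 = 0"
      using gale_crit[OF I0 c1 c2 c5 xyz(1-3)] unfolding G_def by blast
    have "ind3 (G x) (G y) (G z)" unfolding ind3_def
    proof (intro allI impI)
      fix p :: "bit \<times> bit \<times> bit" assume np: "p \<noteq> (0,0,0)"
      obtain p1 p2 p3 where pe: "p = (p1,p2,p3)" by (cases p) auto
      show "\<not> (dot3 p (G x) = 0 \<and> dot3 p (G y) = 0 \<and> dot3 p (G z) = 0)"
      proof
        assume D: "dot3 p (G x) = 0 \<and> dot3 p (G y) = 0 \<and> dot3 p (G z) = 0"
        have "p1 = 0 \<and> p2 = 0 \<and> p3 = 0" using H D unfolding pe by blast
        then show False using np pe by simp
      qed
    qed
    then show ?thesis using ind3_iff by blast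
  qed
  have Gr: "G r1 = (1,0,0)" "G r2 = (0,1,0)" "G r5 = (0,0,1)"
    unfolding G_def GV_def using F0_facts by (simp_all add: gal_at)
  define g where "g = (\<lambda>i. G (i,0))"
  have "validg g" unfolding validg_def
  proof (intro ballI, clarify)
    fix x y z assume "(x,y,z) \<in> goodtri"
    then show "det3 (g x) (g y) (g z) = 1" unfolding g_def
      using detG[of "(x,0)" "(y,0)" "(z,0)"] goodtri_distinct rep_in by auto
  qed
  moreover have "g 1 = (1,0,0)" "g 2 = (0,1,0)" "g 5 = (0,0,1)" using Gr unfolding g_def by auto
  ultimately obtain k where k: "k \<in> {1,2}" "\<forall>i\<in>{1..7}. g i = gsol k i"
    using classify by blast
  have GV: "G v = gsol k (fst v)" if v: "v \<in> V" for v
  proof -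
    let ?i = "fst v"
    have i: "?i \<in> {1..7}" using mem_V[OF v] .
    define \<sigma> where "\<sigma> = (\<lambda>j. if j = ?i then v else (j,0::nat))"
    have s: "j \<in> {1..7} \<Longrightarrow> \<sigma> j \<in> V \<and> fst (\<sigma> j) = j" for j
      unfolding \<sigma>_def using v rep_in by auto
    have h: "j \<in> {1..7} \<Longrightarrow> ((gsol k)(?i := G v)) j = G (\<sigma> j)" for j
      unfolding \<sigma>_def using k(2) unfolding g_def by auto
    have "validg ((gsol k)(?i := G v))" unfolding validg_def
    proof (intro ballI, clarify)
      fix x y z assume t: "(x,y,z) \<in> goodtri"
      then have "x \<in> {1..7}" "y \<in> {1..7}" "z \<in> {1..7}" using goodtri_distinct by auto
      then show "det3 (((gsol k)(?i := G v)) x) (((gsol k)(?i := G v)) y) (((gsol k)(?i := G v)) z) = 1"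
        using h detG[of "\<sigma> x" "\<sigma> y" "\<sigma> z"] s t by simp
    qed
    from const[OF k(1) i this] show ?thesis by simp
  qed
  have cc: "c1 w = Ck k r1 w" "c2 w = Ck k r2 w" "c5 w = Ck k r5 w" if w: "w \<in> F0" for w
  proof -
    have "w \<in> V" "w \<noteq> r1" "w \<noteq> r2" "w \<noteq> r5" using w F0_facts by auto
    have "G w = (c1 w, c2 w, c5 w)" unfolding G_def GV_def
      using gal_in_bit[OF w, of r1 c1] gal_in_bit[OF w, of r2 c2] gal_in_bit[OF w, of r5 c5] F0_facts by simp
    then have e: "gsol k (fst w) = (c1 w, c2 w, c5 w)" using GV[of w] \<open>w \<in> V\<close> by simp
    show "c1 w = Ck k r1 w" "c2 w = Ck k r2 w" "c5 w = Ck k r5 w"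
      unfolding Ck_def comp_def e by simp_all
  qed
  define A where "A = (\<lambda>i l. lam (e0 l) i)"
  obtain B where B: "\<forall>i<n. \<forall>j<n. (\<Sum>l<n. A i l * B l j) = (if i=j then 1 else 0)"
      "\<forall>i<n. \<forall>j<n. (\<Sum>l<n. B i l * A l j) = (if i=j then 1 else 0)"
    using la_inv_of_indep[of n A] indep_cols[OF I0 e0_bij] unfolding A_def by blast
  have GL: "GL_Z2 n A" unfolding GL_Z2_def using B by blast
  have eqn: "lam j i = (\<Sum>l<n. A i l * lamk k j l)" if j: "j \<in> V" and i: "i < n" for j i
  proof (cases "j \<in> F0")
    case True
    have "(\<Sum>l<n. A i l * lamk k j l) = (\<Sum>l<n. lam (e0 l) i * (if j = e0 l then 1 else 0))"
      unfolding A_def lamk_def using True by (intro sum.cong) auto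
    also have "\<dots> = (\<Sum>w\<in>F0. lam w i * (if j = w then 1 else 0))"
      by (rule sum_bij_reindex[OF e0_bij, symmetric])
    also have "\<dots> = lam j i" using True F0_facts(2) by (simp add: if_distrib cong: if_cong)
    finally show ?thesis by simp
  next
    case False
    have S: "(\<Sum>l<n. A i l * lamk k j l) = (\<Sum>w\<in>F0. lam w i * Ck k j w)"
    proof -
      have "(\<Sum>l<n. A i l * lamk k j l) = (\<Sum>l<n. lam (e0 l) i * Ck k j (e0 l))"
        unfolding A_def lamk_def Ck_def using False by (intro sum.cong) auto
      also have "\<dots> = (\<Sum>w\<in>F0. lam w i * Ck k j w)"
        by (rule sum_bij_reindex[OF e0_bij, symmetric])
      finally show ?thesis .
    qed
    have "j = r1 \<or> j = r2 \<or> j = r5" using j False F0_facts by auto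
    then show ?thesis
    proof (elim disjE)
      assume jr: "j = r1"
      have "lam j i = (\<Sum>v\<in>F0. c1 v * lam v i)" using c1 i jr by blast
      also have "\<dots> = (\<Sum>w\<in>F0. lam w i * Ck k j w)"
        by (rule sum.cong) (use cc(1) jr in \<open>auto simp: mult.commute\<close>)
      also have "\<dots> = (\<Sum>l<n. A i l * lamk k j l)" using S by (rule sym)
      finally show ?thesis .
    next
      assume jr: "j = r2"
      have "lam j i = (\<Sum>v\<in>F0. c2 v * lam v i)" using c2 i jr by blast
      also have "\<dots> = (\<Sum>w\<in>F0. lam w i * Ck k j w)"
        by (rule sum.cong) (use cc(2) jr in \<open>auto simp: mult.commute\<close>)
      also have "\<dots> = (\<Sum>l<n. A i l * lamk k j l)" using S by (rule sym)
      finally show ?thesis .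
    next
      assume jr: "j = r5"
      have "lam j i = (\<Sum>v\<in>F0. c5 v * lam v i)" using c5 i jr by blast
      also have "\<dots> = (\<Sum>w\<in>F0. lam w i * Ck k j w)"
        by (rule sum.cong) (use cc(3) jr in \<open>auto simp: mult.commute\<close>)
      also have "\<dots> = (\<Sum>l<n. A i l * lamk k j l)" using S by (rule sym)
      finally show ?thesis .
    qed
  qed
  have "DJ_equiv a (lamk k) lam" unfolding DJ_equiv_def using GL eqn by blast
  then show ?thesis using k(1) by blast
qed

end



lemma wall_core:
  fixes u :: "'v \<Rightarrow> nat \<Rightarrow> int" and l :: "'v \<Rightarrow> real"
  assumes G: "finite G" "z \<notin> G" "w \<notin> G" "z \<noteq> w"
    and rel: "\<forall>i. \<alpha> * real_of_int (u z i) - \<beta> * real_of_int (u w i) + (\<Sum>v\<in>G. l v * real_of_int (u v i)) = 0"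
    and ab: "\<alpha> > 0" "\<beta> > 0"
    and fan: "ray_cone u (insert w G) \<inter> ray_cone u (insert z G) \<subseteq> ray_cone u G"
    and ind: "\<forall>\<kappa>. (\<forall>i<n. (\<Sum>v\<in>insert w G. \<kappa> v * real_of_int (u v i)) = 0) \<longrightarrow> \<kappa> w = 0"
  shows False
proof -
  define t where "t = (\<Sum>v\<in>G. \<bar>l v\<bar>)"
  have lt: "\<bar>l v\<bar> \<le> t" if "v \<in> G" for v unfolding t_def using that G(1) by (intro member_le_sum) auto
  have t0: "t \<ge> 0" unfolding t_def by (simp add: sum_nonneg)
  define p where "p = (\<lambda>i. \<beta> * real_of_int (u w i) + (\<Sum>v\<in>G. t * real_of_int (u v i)))"
  have p1: "p \<in> ray_cone u (insert w G)" unfolding ray_cone_def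
  proof (intro CollectI exI[of _ "\<lambda>v. if v = w then \<beta> else t"] conjI allI ballI)
    fix j assume "j \<in> insert w G" then show "0 \<le> (if j = w then \<beta> else t)" using ab t0 by auto
  next
    fix i
    have "(\<Sum>v\<in>insert w G. (if v = w then \<beta> else t) * real_of_int (u v i))
        = \<beta> * real_of_int (u w i) + (\<Sum>v\<in>G. (if v = w then \<beta> else t) * real_of_int (u v i))"
      using G by (simp add: sum.insert)
    also have "(\<Sum>v\<in>G. (if v = w then \<beta> else t) * real_of_int (u v i)) = (\<Sum>v\<in>G. t * real_of_int (u v i))"
      using G by (intro sum.cong) auto
    finally show "p i = (\<Sum>v\<in>insert w G. (if v = w then \<beta> else t) * real_of_int (u v i))" unfolding p_def by simp
  qed
  have p2: "p \<in> ray_cone u (insert z G)" unfolding ray_cone_def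
  proof (intro CollectI exI[of _ "\<lambda>v. if v = z then \<alpha> else l v + t"] conjI allI ballI)
    fix j assume "j \<in> insert z G" then show "0 \<le> (if j = z then \<alpha> else l j + t)" using ab lt[of j] by (cases "j = z") auto
  next
    fix i
    have "(\<Sum>v\<in>insert z G. (if v = z then \<alpha> else l v + t) * real_of_int (u v i))
        = \<alpha> * real_of_int (u z i) + (\<Sum>v\<in>G. (if v = z then \<alpha> else l v + t) * real_of_int (u v i))"
      using G by (simp add: sum.insert)
    also have "(\<Sum>v\<in>G. (if v = z then \<alpha> else l v + t) * real_of_int (u v i))
        = (\<Sum>v\<in>G. l v * real_of_int (u v i)) + (\<Sum>v\<in>G. t * real_of_int (u v i))"
      using G by (simp add: sum.distrib[symmetric] distrib_right cong: sum.cong) (intro sum.cong, auto simp: distrib_right)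
    finally show "p i = (\<Sum>v\<in>insert z G. (if v = z then \<alpha> else l v + t) * real_of_int (u v i))"
      unfolding p_def using rel[rule_format, of i] by linarith
  qed
  from p1 p2 fan have "p \<in> ray_cone u G" by blast
  then obtain s where s: "\<forall>i. p i = (\<Sum>v\<in>G. s v * real_of_int (u v i))"
    unfolding ray_cone_def by blast
  define \<kappa> where "\<kappa> = (\<lambda>v. if v = w then \<beta> else t - s v)"
  have "\<forall>i<n. (\<Sum>v\<in>insert w G. \<kappa> v * real_of_int (u v i)) = 0"
  proof (intro allI impI)
    fix i
    have "(\<Sum>v\<in>insert w G. \<kappa> v * real_of_int (u v i)) = \<beta> * real_of_int (u w i) + (\<Sum>v\<in>G. \<kappa> v * real_of_int (u v i))"
      using G unfolding \<kappa>_def by (simp add: sum.insert)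
    also have "(\<Sum>v\<in>G. \<kappa> v * real_of_int (u v i)) = (\<Sum>v\<in>G. t * real_of_int (u v i)) - (\<Sum>v\<in>G. s v * real_of_int (u v i))"
      using G unfolding \<kappa>_def by (simp add: sum_subtractf[symmetric] left_diff_distrib cong: sum.cong) (intro sum.cong, auto simp: left_diff_distrib)
    finally show "(\<Sum>v\<in>insert w G. \<kappa> v * real_of_int (u v i)) = 0" using s[rule_format, of i] unfolding p_def by linarith
  qed
  then have "\<kappa> w = 0" using ind by blast
  then show False using ab unfolding \<kappa>_def by simp
qed

fun cross3 :: "'a::comm_ring_1 \<times> 'a \<times> 'a \<Rightarrow> 'a \<times> 'a \<times> 'a \<Rightarrow> 'a \<times> 'a \<times> 'a" where
  "cross3 (a1,a2,a3) (b1,b2,b3) = (a2*b3 - a3*b2, a3*b1 - a1*b3, a1*b2 - a2*b1)"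

lemma dot_cross: "dot3 (cross3 a b) c = det3 a b c"
  by (cases a; cases b; cases c) (simp add: algebra_simps)

lemma det3_rep: "det3 a a c = 0" "det3 a b b = 0" "det3 a b a = 0"
  by (cases a; cases b; cases c; simp add: algebra_simps)+

lemma det3_mult: "det3 p q r * det3 a b c =
  det3 (dot3 p a, dot3 p b, dot3 p c) (dot3 q a, dot3 q b, dot3 q c) (dot3 r a, dot3 r b, dot3 r c)"
  by (cases p; cases q; cases r; cases a; cases b; cases c) (simp add: algebra_simps)

lemma det3_pm1:
  fixes a b c :: "int \<times> int \<times> int"
  assumes "dot3 p a = 1" "dot3 p b = 0" "dot3 p c = 0"
    "dot3 q a = 0" "dot3 q b = 1" "dot3 q c = 0"
    "dot3 r a = 0" "dot3 r b = 0" "dot3 r c = 1"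
  shows "det3 a b c = 1 \<or> det3 a b c = -1"
proof -
  have "det3 p q r * det3 a b c = 1" unfolding det3_mult assms by simp
  then show ?thesis using zmult_eq_1_iff by blast
qed

locale fanctx = hept +
  fixes u :: "nat \<times> nat \<Rightarrow> nat \<Rightarrow> int"
  assumes fan: "complete_nonsing_fan a u"
begin

definition wR :: "nat \<times> nat \<Rightarrow> nat \<Rightarrow> real" where "wR v i = real_of_int (u v i)"

lemma fan1: "\<forall>j\<in>V. in_Zn n (u j)"
  using conjunct1[OF fan[unfolded complete_nonsing_fan_def]] .

lemma fan2: "\<forall>I. hface a I \<longrightarrow> inj_on u I \<and> (\<exists>B. Z_basis n B \<and> u ` I \<subseteq> B)"
  using conjunct1[OF conjunct2[OF fan[unfolded complete_nonsing_fan_def]]] .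

lemma fan3: "\<forall>I J. hface a I \<longrightarrow> hface a J \<longrightarrow> ray_cone u I \<inter> ray_cone u J = ray_cone u (I \<inter> J)"
  using conjunct1[OF conjunct2[OF conjunct2[OF fan[unfolded complete_nonsing_fan_def]]]] .

lemma uZn: "v \<in> V \<Longrightarrow> in_Zn n (u v)" using fan1 by blast

lemma Zspan:
  assumes S: "hface a S" "card S = n" and x: "in_Zn n x"
  shows "\<exists>c::_ \<Rightarrow> int. \<forall>i. x i = (\<Sum>v\<in>S. c v * u v i)"
proof -
  obtain B where inj: "inj_on u S" and B: "Z_basis n B" "u ` S \<subseteq> B"
    using fan2 S(1) by blast
  have SV: "S \<subseteq> V" using S(1) unfolding hface_def by blast
  then have fS: "finite S" using finV finite_subset by blast
  have "card (u ` S) = n" using card_image[OF inj] S(2) by simp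
  then have uB: "u ` S = B" using B unfolding Z_basis_def by (intro card_subset_eq) auto
  obtain c where c: "\<forall>i. x i = (\<Sum>b\<in>B. c b * b i)" using B x unfolding Z_basis_def by blast
  show ?thesis
  proof (intro exI allI)
    fix i
    have "(\<Sum>b\<in>B. c b * b i) = (\<Sum>v\<in>S. c (u v) * u v i)" unfolding uB[symmetric]
      using sum.reindex[OF inj, of "\<lambda>b. c b * b i"] by simp
    then show "x i = (\<Sum>v\<in>S. c (u v) * u v i)" using c by simp
  qed
qed

lemma Rindep:
  assumes S: "hface a S" "card S = n"
  shows "indep_on n wR S"
proof -
  have SV: "S \<subseteq> V" using S(1) unfolding hface_def by blast
  then have fS: "finite S" using finV finite_subset by blast
  obtain e where e: "bij_betw e {..<n} S" using ex_bij_betw_nat_finite[OF fS] S(2) by (metis lessThan_atLeast0)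
  show ?thesis
  proof (rule indep_of_span[OF e], intro allI impI)
    fix k assume k: "k < n"
    have "in_Zn n (\<lambda>i. if i = k then 1 else 0)" unfolding in_Zn_def using k by auto
    from Zspan[OF S this] obtain c where c: "\<forall>i. (if i = k then 1 else 0) = (\<Sum>v\<in>S. c v * u v i)" by blast
    show "\<exists>d. \<forall>i<n. (if i = k then 1 else 0) = (\<Sum>v\<in>S. d v * wR v i)"
    proof (intro exI allI impI)
      fix i
      have "real_of_int (if i = k then 1 else 0) = real_of_int (\<Sum>v\<in>S. c v * u v i)" by (subst c[rule_format, of i]) (rule refl)
      then show "(if i = k then 1 else 0) = (\<Sum>v\<in>S. real_of_int (c v) * wR v i)"
        unfolding wR_def by (simp add: if_distrib cong: if_cong)
    qed
  qed
qed

end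



lemma det3_perm: "det3 a c b = - det3 a b c" "det3 b a c = - det3 a b c" "det3 b c a = det3 a b c"
  "det3 c a b = det3 a b c" "det3 c b a = - det3 a b c"
  by (cases a; cases b; cases c; simp add: algebra_simps)+

context fanctx
begin

definition ci :: "nat \<times> nat \<Rightarrow> nat \<times> nat \<Rightarrow> int" where
  "ci r = (SOME c. \<forall>i. u r i = (\<Sum>v\<in>F0. c v * u v i))"

lemma F0_card: "card F0 = n" unfolding F0_def using card_trans[OF r_in good125] .

lemma ci_spec: "r \<in> {r1,r2,r5} \<Longrightarrow> \<forall>i. u r i = (\<Sum>v\<in>F0. ci r v * u v i)"
proof -
  assume r: "r \<in> {r1,r2,r5}"
  have "in_Zn n (u r)" using uZn r r_in by auto
  from Zspan[OF F0_face F0_card this] show ?thesis unfolding ci_def by (rule someI_ex)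
qed

definition gi :: "nat \<times> nat \<Rightarrow> nat \<times> nat \<Rightarrow> int" where
  "gi r v = (if v = r then 1 else 0) - (if v \<in> F0 then ci r v else 0)"

definition Gi :: "nat \<times> nat \<Rightarrow> int \<times> int \<times> int" where
  "Gi v = (gi r1 v, gi r2 v, gi r5 v)"

lemma gal_gi: "gal F0 r (\<lambda>v. real_of_int (ci r v)) v = real_of_int (gi r v)"
  unfolding gal_def gi_def by simp

lemma cR: "r \<in> {r1,r2,r5} \<Longrightarrow> \<forall>i<n. wR r i = (\<Sum>v\<in>F0. real_of_int (ci r v) * wR v i)"
proof (intro allI impI)
  fix i assume r: "r \<in> {r1,r2,r5}" and "i < n"
  have "real_of_int (u r i) = real_of_int (\<Sum>v\<in>F0. ci r v * u v i)" using ci_spec[OF r] by metis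
  then show "wR r i = (\<Sum>v\<in>F0. real_of_int (ci r v) * wR v i)" unfolding wR_def by simp
qed

lemma cR1: "\<forall>i<n. wR r1 i = (\<Sum>v\<in>F0. real_of_int (ci r1 v) * wR v i)" by (rule cR) simp
lemma cR2: "\<forall>i<n. wR r2 i = (\<Sum>v\<in>F0. real_of_int (ci r2 v) * wR v i)" by (rule cR) simp
lemma cR5: "\<forall>i<n. wR r5 i = (\<Sum>v\<in>F0. real_of_int (ci r5 v) * wR v i)" by (rule cR) simp

lemma I0: "indep_on n wR F0" using Rindep[OF F0_face F0_card] .

lemma expandR:
  assumes "rel n wR V l" "v \<in> V"
  shows "l v = l r1 * real_of_int (gi r1 v) + l r2 * real_of_int (gi r2 v) + l r5 * real_of_int (gi r5 v)"
  using gale_expand[OF F0_facts I0 cR1 cR2 cR5 assms] unfolding gal_gi .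

lemma relcombo: "rel n wR V (\<lambda>v. real_of_int (dot3 p (Gi v)))"
proof -
  obtain p1 p2 p3 where p: "p = (p1,p2,p3)" by (cases p) auto
  have g1: "rel n wR V (gal F0 r1 (\<lambda>v. real_of_int (ci r1 v)))" by (rule gale_rel[OF F0_facts _ cR1]) simp
  have g2: "rel n wR V (gal F0 r2 (\<lambda>v. real_of_int (ci r2 v)))" by (rule gale_rel[OF F0_facts _ cR2]) simp
  have g3: "rel n wR V (gal F0 r5 (\<lambda>v. real_of_int (ci r5 v)))" by (rule gale_rel[OF F0_facts _ cR5]) simp
  have "rel n wR V (\<lambda>v. of_int p1 * gal F0 r1 (\<lambda>v. real_of_int (ci r1 v)) v + of_int p2 * gal F0 r2 (\<lambda>v. real_of_int (ci r2 v)) v)"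
    by (rule rel_lin[OF g1 g2])
  from rel_lin[OF this g3, of 1 "of_int p3"]
  show ?thesis unfolding gal_gi p Gi_def by (simp add: mult.commute)
qed

lemma Gi_r: "Gi r1 = (1,0,0)" "Gi r2 = (0,1,0)" "Gi r5 = (0,0,1)"
  unfolding Gi_def gi_def using F0_facts by auto

lemma dualvec:
  assumes xyz: "x \<in> V" "y \<in> V" "z \<in> V" "x \<noteq> y" "x \<noteq> z" "y \<noteq> z"
    and S: "hface a (V - {x,y,z})" "card (V - {x,y,z}) = n"
  shows "\<exists>p. dot3 p (Gi x) = 1 \<and> dot3 p (Gi y) = 0 \<and> dot3 p (Gi z) = 0"
proof -
  let ?S = "V - {x,y,z}"
  obtain d where d: "\<forall>i. u x i = (\<Sum>v\<in>?S. d v * u v i)" using Zspan[OF S uZn[OF xyz(1)]] by blast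
  have dR: "\<forall>i<n. wR x i = (\<Sum>v\<in>?S. real_of_int (d v) * wR v i)"
  proof (intro allI impI)
    fix i
    have "real_of_int (u x i) = real_of_int (\<Sum>v\<in>?S. d v * u v i)" by (subst d[rule_format, of i]) (rule refl)
    then show "wR x i = (\<Sum>v\<in>?S. real_of_int (d v) * wR v i)" unfolding wR_def by simp
  qed
  have VV: "V = insert x (insert y (insert z ?S))" "finite ?S" "x \<notin> ?S" "y \<notin> ?S" "z \<notin> ?S"
    using xyz finV by auto
  have R: "rel n wR V (gal ?S x (\<lambda>v. real_of_int (d v)))"
    by (rule gale_rel[OF VV xyz(4-6) _ dR]) simp
  define li where "li = (\<lambda>v. (if v = x then 1 else 0) - (if v \<in> ?S then d v else 0 :: int))"
  have lil: "gal ?S x (\<lambda>v. real_of_int (d v)) v = real_of_int (li v)" for v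
    unfolding gal_def li_def by simp
  have e: "li v = dot3 (li r1, li r2, li r5) (Gi v)" if "v \<in> V" for v
  proof -
    have "real_of_int (li v) = real_of_int (li r1) * real_of_int (gi r1 v) + real_of_int (li r2) * real_of_int (gi r2 v)
        + real_of_int (li r5) * real_of_int (gi r5 v)"
      using expandR[OF R that] unfolding lil .
    then have "real_of_int (li v) = real_of_int (li r1 * gi r1 v + li r2 * gi r2 v + li r5 * gi r5 v)" by simp
    then have "li v = li r1 * gi r1 v + li r2 * gi r2 v + li r5 * gi r5 v" by (simp only: of_int_eq_iff)
    then show ?thesis unfolding Gi_def by (simp add: mult.commute)
  qed
  have "li x = 1" "li y = 0" "li z = 0" unfolding li_def using xyz by auto
  then show ?thesis using e xyz by metis
qed

lemma pm1:
  assumes xyz: "x \<in> V" "y \<in> V" "z \<in> V" "x \<noteq> y" "x \<noteq> z" "y \<noteq> z"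
    and S: "hface a (V - {x,y,z})" "card (V - {x,y,z}) = n"
  shows "det3 (Gi x) (Gi y) (Gi z) = 1 \<or> det3 (Gi x) (Gi y) (Gi z) = -1"
proof -
  have s1: "V - {y,x,z} = V - {x,y,z}" "V - {z,x,y} = V - {x,y,z}" by auto
  obtain p where p: "dot3 p (Gi x) = 1 \<and> dot3 p (Gi y) = 0 \<and> dot3 p (Gi z) = 0"
    using dualvec[OF xyz S] by blast
  obtain q where q: "dot3 q (Gi y) = 1 \<and> dot3 q (Gi x) = 0 \<and> dot3 q (Gi z) = 0"
    using dualvec[of y x z] xyz S s1 by auto
  obtain r where r: "dot3 r (Gi z) = 1 \<and> dot3 r (Gi x) = 0 \<and> dot3 r (Gi y) = 0"
    using dualvec[of z x y] xyz S s1 by auto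
  from p q r show ?thesis by (intro det3_pm1[where p=p and q=q and r=r]) auto
qed

lemma wall:
  assumes xyzw: "x \<in> V" "y \<in> V" "z \<in> V" "w \<in> V" "x \<noteq> y" "x \<noteq> z" "x \<noteq> w" "y \<noteq> z" "y \<noteq> w" "z \<noteq> w"
    and F: "hface a (V - {x,y,z})" "card (V - {x,y,z}) = n"
    and F': "hface a (V - {x,y,w})" "card (V - {x,y,w}) = n"
    and nz: "det3 (Gi x) (Gi y) (Gi z) \<noteq> 0" "det3 (Gi x) (Gi y) (Gi w) \<noteq> 0"
  shows "det3 (Gi x) (Gi y) (Gi z) * det3 (Gi x) (Gi y) (Gi w) > 0"
proof (rule ccontr)
  define D1 where "D1 = det3 (Gi x) (Gi y) (Gi z)"
  define D2 where "D2 = det3 (Gi x) (Gi y) (Gi w)"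
  assume "\<not> ?thesis"
  then have neg: "D1 * D2 < 0" using nz unfolding D1_def D2_def
    by (metis linorder_neqE_linordered_idom mult_eq_0_iff)
  define l where "l = (\<lambda>v. real_of_int (det3 (Gi x) (Gi y) (Gi v)))"
  have R: "rel n wR V l" unfolding l_def dot_cross[symmetric] by (rule relcombo)
  have lx: "l x = 0" "l y = 0" unfolding l_def by (simp_all add: det3_rep)
  have Rall: "(\<Sum>v\<in>V. l v * wR v i) = 0" for i
  proof (cases "i < n")
    case True then show ?thesis using R unfolding rel_def by blast
  next
    case False
    then have "wR v i = 0" if "v \<in> V" for v using uZn[OF that] unfolding in_Zn_def wR_def by simp
    then show ?thesis by simp
  qed
  define G where "G = V - {x,y,z,w}"
  have GG: "finite G" "z \<notin> G" "w \<notin> G" "x \<notin> G" "y \<notin> G" using finV unfolding G_def by auto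
  have VG: "V = insert x (insert y (insert z (insert w G)))" using xyzw unfolding G_def by auto
  have rel': "real_of_int D1 * real_of_int (u z i) + real_of_int D2 * real_of_int (u w i)
       + (\<Sum>v\<in>G. l v * real_of_int (u v i)) = 0" for i
  proof -
    have "(\<Sum>v\<in>V. l v * wR v i) = l x * wR x i + l y * wR y i + l z * wR z i + l w * wR w i + (\<Sum>v\<in>G. l v * wR v i)"
      unfolding VG using GG xyzw by (simp add: algebra_simps)
    then show ?thesis using Rall[of i] lx unfolding l_def D1_def D2_def wR_def by simp
  qed
  have FG: "insert w G = V - {x,y,z}" "insert z G = V - {x,y,w}" using xyzw unfolding G_def by auto
  have fanG: "ray_cone u (insert w G) \<inter> ray_cone u (insert z G) = ray_cone u G"
  proof -
    have "(V - {x,y,z}) \<inter> (V - {x,y,w}) = G" unfolding G_def by auto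
    then show ?thesis unfolding FG using fan3 F(1) F'(1) by metis
  qed
  have indF: "\<forall>\<kappa>. (\<forall>i<n. (\<Sum>v\<in>insert w G. \<kappa> v * real_of_int (u v i)) = 0) \<longrightarrow> \<kappa> w = 0"
    using Rindep[OF F] unfolding FG[symmetric] indep_on_def rel_def wR_def by (simp add: mult.commute)
  have indF': "\<forall>\<kappa>. (\<forall>i<n. (\<Sum>v\<in>insert z G. \<kappa> v * real_of_int (u v i)) = 0) \<longrightarrow> \<kappa> z = 0"
    using Rindep[OF F'] unfolding FG[symmetric] indep_on_def rel_def wR_def by (simp add: mult.commute)
  show False
  proof (cases "D1 > 0")
    case True
    then have "D2 < 0" using neg by (simp add: mult_less_0_iff)
    show False
    proof (rule wall_core[OF GG(1-3) xyzw(10) _ _ _ _ indF])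
      show "\<forall>i. real_of_int D1 * real_of_int (u z i) - (- real_of_int D2) * real_of_int (u w i) + (\<Sum>v\<in>G. l v * real_of_int (u v i)) = 0"
        using rel' by simp
      show "real_of_int D1 > 0" "- real_of_int D2 > 0" using True \<open>D2 < 0\<close> by simp_all
      show "ray_cone u (insert w G) \<inter> ray_cone u (insert z G) \<subseteq> ray_cone u G" using fanG by simp
    qed
  next
    case False
    then have "D1 < 0" "D2 > 0" using neg nz unfolding D1_def[symmetric] D2_def[symmetric]
      by (auto simp: mult_less_0_iff)
    show False
    proof (rule wall_core[OF GG(1) GG(3) GG(2) xyzw(10)[symmetric] _ _ _ _ indF'])
      show "\<forall>i. real_of_int D2 * real_of_int (u w i) - (- real_of_int D1) * real_of_int (u z i) + (\<Sum>v\<in>G. l v * real_of_int (u v i)) = 0"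
        using rel' by (simp add: algebra_simps)
      show "real_of_int D2 > 0" "- real_of_int D1 > 0" using \<open>D1 < 0\<close> \<open>D2 > 0\<close> by simp_all
      show "ray_cone u (insert z G) \<inter> ray_cone u (insert w G) \<subseteq> ray_cone u G" using fanG by blast
    qed
  qed
qed

end



context fanctx
begin

definition D :: "nat \<Rightarrow> nat \<Rightarrow> nat \<Rightarrow> int" where
  "D i j k = det3 (Gi (i,0)) (Gi (j,0)) (Gi (k,0))"

lemma fac:
  assumes "(i,j,k) \<in> goodtri"
  shows "hface a (V - {(i,0),(j,0),(k,0)}) \<and> card (V - {(i,0),(j,0),(k,0)}) = n"
proof -
  have "i \<in> {1..7}" "j \<in> {1..7}" "k \<in> {1..7}" using goodtri_distinct[OF assms] by auto
  then have r: "(i,0) \<in> V" "(j,0) \<in> V" "(k,0) \<in> V" using rep_in by auto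
  have g: "(fst (i,0::nat), fst (j,0::nat), fst (k,0::nat)) \<in> goodtri" using assms by simp
  show ?thesis using face_trans[OF r g] card_trans[OF r g] by simp
qed

lemma pmD:
  assumes "(i,j,k) \<in> goodtri"
  shows "D i j k = 1 \<or> D i j k = -1"
proof -
  have d: "i \<in> {1..7}" "j \<in> {1..7}" "k \<in> {1..7}" "i \<noteq> j" "i \<noteq> k" "j \<noteq> k" using goodtri_distinct[OF assms] by auto
  then have r: "(i,0) \<in> V" "(j,0) \<in> V" "(k,0) \<in> V" using rep_in by auto
  show ?thesis unfolding D_def using pm1[OF r] d fac[OF assms] by simp
qed

lemma wallD:
  assumes t1: "(ta,tb,tc) \<in> goodtri" and t2: "(sa,sb,sc) \<in> goodtri"
    and s1: "{x,y,z} = {ta,tb,tc}" and s2: "{x,y,w} = {sa,sb,sc}"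
    and d: "x \<in> {1..7}" "y \<in> {1..7}" "z \<in> {1..7}" "w \<in> {1..7}" "x \<noteq> y" "x \<noteq> z" "x \<noteq> w" "y \<noteq> z" "y \<noteq> w" "z \<noteq> w"
  shows "D x y z * D x y w > 0"
proof -
  have r: "(x,0) \<in> V" "(y,0) \<in> V" "(z,0) \<in> V" "(w,0) \<in> V" using rep_in d by auto
  have i1: "{(x,0::nat),(y,0),(z,0)} = {(ta,0),(tb,0),(tc,0)}"
  proof -
    have "{(x,0::nat),(y,0),(z,0)} = (\<lambda>i. (i,0::nat)) ` {x,y,z}" by simp
    also have "\<dots> = (\<lambda>i. (i,0::nat)) ` {ta,tb,tc}" using s1 by simp
    finally show ?thesis by simp
  qed
  have i2: "{(x,0::nat),(y,0),(w,0)} = {(sa,0),(sb,0),(sc,0)}"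
  proof -
    have "{(x,0::nat),(y,0),(w,0)} = (\<lambda>i. (i,0::nat)) ` {x,y,w}" by simp
    also have "\<dots> = (\<lambda>i. (i,0::nat)) ` {sa,sb,sc}" using s2 by simp
    finally show ?thesis by simp
  qed
  have F: "hface a (V - {(x,0),(y,0),(z,0)})" "card (V - {(x,0),(y,0),(z,0)}) = n"
    using fac[OF t1] unfolding i1 by auto
  have F': "hface a (V - {(x,0),(y,0),(w,0)})" "card (V - {(x,0),(y,0),(w,0)}) = n"
    using fac[OF t2] unfolding i2 by auto
  have n1: "det3 (Gi (x,0)) (Gi (y,0)) (Gi (z,0)) \<noteq> 0" using pm1[OF r(1,2,3) _ _ _ F] d by auto
  have n2: "det3 (Gi (x,0)) (Gi (y,0)) (Gi (w,0)) \<noteq> 0" using pm1[OF r(1,2,4) _ _ _ F'] d by auto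
  show ?thesis unfolding D_def by (rule wall[OF r _ _ _ _ _ _ F F' n1 n2]) (use d in auto)
qed

lemma no_fan: False
proof -
  have w0: "D 1 5 2 * D 1 5 3 > 0" by (rule wallD[where x=1 and y=5 and z=2 and w=3 and ta=1 and tb=2 and tc=5 and sa=1 and sb=3 and sc=5]) (auto simp: goodtri_def)
  have p0_0: "D 1 5 2 = -D 1 2 5" unfolding D_def by (rule det3_perm(1))
  have p0_1: "D 1 5 3 = -D 1 3 5" unfolding D_def by (rule det3_perm(1))
  have e0: "D 1 2 5 = D 1 3 5" using w0 p0_0 p0_1 pmD[of 1 2 5] pmD[of 1 3 5] by (auto simp: goodtri_def)
  have w1: "D 1 3 5 * D 1 3 6 > 0" by (rule wallD[where x=1 and y=3 and z=5 and w=6 and ta=1 and tb=3 and tc=5 and sa=1 and sb=3 and sc=6]) (auto simp: goodtri_def)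
  have e1: "D 1 3 5 = D 1 3 6" using w1 pmD[of 1 3 5] pmD[of 1 3 6] by (auto simp: goodtri_def)
  have w2: "D 1 5 2 * D 1 5 4 > 0" by (rule wallD[where x=1 and y=5 and z=2 and w=4 and ta=1 and tb=2 and tc=5 and sa=1 and sb=4 and sc=5]) (auto simp: goodtri_def)
  have p2_0: "D 1 5 2 = -D 1 2 5" unfolding D_def by (rule det3_perm(1))
  have p2_1: "D 1 5 4 = -D 1 4 5" unfolding D_def by (rule det3_perm(1))
  have e2: "D 1 2 5 = D 1 4 5" using w2 p2_0 p2_1 pmD[of 1 2 5] pmD[of 1 4 5] by (auto simp: goodtri_def)
  have w3: "D 1 4 5 * D 1 4 6 > 0" by (rule wallD[where x=1 and y=4 and z=5 and w=6 and ta=1 and tb=4 and tc=5 and sa=1 and sb=4 and sc=6]) (auto simp: goodtri_def)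
  have e3: "D 1 4 5 = D 1 4 6" using w3 pmD[of 1 4 5] pmD[of 1 4 6] by (auto simp: goodtri_def)
  have w4: "D 1 4 6 * D 1 4 7 > 0" by (rule wallD[where x=1 and y=4 and z=6 and w=7 and ta=1 and tb=4 and tc=6 and sa=1 and sb=4 and sc=7]) (auto simp: goodtri_def)
  have e4: "D 1 4 6 = D 1 4 7" using w4 pmD[of 1 4 6] pmD[of 1 4 7] by (auto simp: goodtri_def)
  have w5: "D 3 6 1 * D 3 6 2 > 0" by (rule wallD[where x=3 and y=6 and z=1 and w=2 and ta=1 and tb=3 and tc=6 and sa=2 and sb=3 and sc=6]) (auto simp: goodtri_def)
  have p5_0: "D 3 6 1 = D 1 3 6" unfolding D_def by (rule det3_perm(3))
  have p5_1: "D 3 6 2 = D 2 3 6" unfolding D_def by (rule det3_perm(3))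
  have e5: "D 1 3 6 = D 2 3 6" using w5 p5_0 p5_1 pmD[of 1 3 6] pmD[of 2 3 6] by (auto simp: goodtri_def)
  have w6: "D 2 6 3 * D 2 6 4 > 0" by (rule wallD[where x=2 and y=6 and z=3 and w=4 and ta=2 and tb=3 and tc=6 and sa=2 and sb=4 and sc=6]) (auto simp: goodtri_def)
  have p6_0: "D 2 6 3 = -D 2 3 6" unfolding D_def by (rule det3_perm(1))
  have p6_1: "D 2 6 4 = -D 2 4 6" unfolding D_def by (rule det3_perm(1))
  have e6: "D 2 3 6 = D 2 4 6" using w6 p6_0 p6_1 pmD[of 2 3 6] pmD[of 2 4 6] by (auto simp: goodtri_def)
  have w7: "D 2 4 6 * D 2 4 7 > 0" by (rule wallD[where x=2 and y=4 and z=6 and w=7 and ta=2 and tb=4 and tc=6 and sa=2 and sb=4 and sc=7]) (auto simp: goodtri_def)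
  have e7: "D 2 4 6 = D 2 4 7" using w7 pmD[of 2 4 6] pmD[of 2 4 7] by (auto simp: goodtri_def)
  have w8: "D 2 5 1 * D 2 5 6 > 0" by (rule wallD[where x=2 and y=5 and z=1 and w=6 and ta=1 and tb=2 and tc=5 and sa=2 and sb=5 and sc=6]) (auto simp: goodtri_def)
  have p8_0: "D 2 5 1 = D 1 2 5" unfolding D_def by (rule det3_perm(3))
  have e8: "D 1 2 5 = D 2 5 6" using w8 p8_0 pmD[of 1 2 5] pmD[of 2 5 6] by (auto simp: goodtri_def)
  have w9: "D 2 5 6 * D 2 5 7 > 0" by (rule wallD[where x=2 and y=5 and z=6 and w=7 and ta=2 and tb=5 and tc=6 and sa=2 and sb=5 and sc=7]) (auto simp: goodtri_def)
  have e9: "D 2 5 6 = D 2 5 7" using w9 pmD[of 2 5 6] pmD[of 2 5 7] by (auto simp: goodtri_def)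
  have w10: "D 4 7 2 * D 4 7 3 > 0" by (rule wallD[where x=4 and y=7 and z=2 and w=3 and ta=2 and tb=4 and tc=7 and sa=3 and sb=4 and sc=7]) (auto simp: goodtri_def)
  have p10_0: "D 4 7 2 = D 2 4 7" unfolding D_def by (rule det3_perm(3))
  have p10_1: "D 4 7 3 = D 3 4 7" unfolding D_def by (rule det3_perm(3))
  have e10: "D 2 4 7 = D 3 4 7" using w10 p10_0 p10_1 pmD[of 2 4 7] pmD[of 3 4 7] by (auto simp: goodtri_def)
  have w11: "D 5 7 2 * D 5 7 3 > 0" by (rule wallD[where x=5 and y=7 and z=2 and w=3 and ta=2 and tb=5 and tc=7 and sa=3 and sb=5 and sc=7]) (auto simp: goodtri_def)
  have p11_0: "D 5 7 2 = D 2 5 7" unfolding D_def by (rule det3_perm(3))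
  have p11_1: "D 5 7 3 = D 3 5 7" unfolding D_def by (rule det3_perm(3))
  have e11: "D 2 5 7 = D 3 5 7" using w11 p11_0 p11_1 pmD[of 2 5 7] pmD[of 3 5 7] by (auto simp: goodtri_def)
  have w12: "D 3 7 5 * D 3 7 6 > 0" by (rule wallD[where x=3 and y=7 and z=5 and w=6 and ta=3 and tb=5 and tc=7 and sa=3 and sb=6 and sc=7]) (auto simp: goodtri_def)
  have p12_0: "D 3 7 5 = -D 3 5 7" unfolding D_def by (rule det3_perm(1))
  have p12_1: "D 3 7 6 = -D 3 6 7" unfolding D_def by (rule det3_perm(1))
  have e12: "D 3 5 7 = D 3 6 7" using w12 p12_0 p12_1 pmD[of 3 5 7] pmD[of 3 6 7] by (auto simp: goodtri_def)
  have root: "D 1 2 5 = 1" unfolding D_def using Gi_r by simp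
  have all: "D 1 2 5 = 1" "D 1 3 5 = 1" "D 1 3 6 = 1" "D 1 4 5 = 1" "D 1 4 6 = 1" "D 1 4 7 = 1"
    "D 2 3 6 = 1" "D 2 4 6 = 1" "D 2 4 7 = 1" "D 2 5 6 = 1" "D 2 5 7 = 1" "D 3 4 7 = 1" "D 3 5 7 = 1" "D 3 6 7 = 1"
    using root e0 e1 e2 e3 e4 e5 e6 e7 e8 e9 e10 e11 e12 by simp_all
  define g where "g = (\<lambda>i. Gi (i,0))"
  show False
  proof (rule intcore[of g])
    show "g 1 = (1,0,0)" "g 2 = (0,1,0)" "g 5 = (0,0,1)" unfolding g_def using Gi_r by simp_all
    show "\<forall>(x,y,z)\<in>goodtri. det3 (g x) (g y) (g z) = 1"
      using all unfolding goodtri_def g_def D_def by simp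
  qed
qed

end



theorem proposition8p4:
  fixes a :: "nat \<Rightarrow> nat"
  assumes "\<forall>i\<in>{1..7}. a i > 0"
  shows "\<exists>lam1 lam2. char_map_Z2 a lam1 \<and> char_map_Z2 a lam2 \<and> \<not> DJ_equiv a lam1 lam2 \<and>
           (\<forall>lam. char_map_Z2 a lam \<longrightarrow> DJ_equiv a lam1 lam \<or> DJ_equiv a lam2 lam)
         \<and> (\<forall>lam. char_map_Z2 a lam \<longrightarrow> \<not> real_toric a lam)"
proof -
  interpret hept a using assms by unfold_locales
  have nf: "\<not> real_toric a lam" for lam
  proof
    assume "real_toric a lam"
    then obtain u where "complete_nonsing_fan a u" unfolding real_toric_def by blast
    then interpret fanctx a u by unfold_locales
    show False by (rule no_fan)
  qed
  show ?thesis
  proof (intro exI conjI allI impI)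
    show "char_map_Z2 a (lamk 1)" "char_map_Z2 a (lamk 2)" using lamk_char by auto
    show "\<not> DJ_equiv a (lamk 1) (lamk 2)" by (rule lamk_not_equiv)
    fix lam assume "char_map_Z2 a lam"
    then show "DJ_equiv a (lamk 1) lam \<or> DJ_equiv a (lamk 2) lam" using classify_lam by auto
  next
    fix lam show "\<not> real_toric a lam" by (rule nf)
  qed
qed



end
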